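(* Let $r,s$ be positive integers, $1\le e\le s$, and let $S\subseteq[F]^{r,s}$ be $e$-superlarge. Let $\sigma$ be a sentence of type $\Sigma^*(\mathrm{iv})$ such that every $c_{ij}$ occurring in $\sigma$ satisfies $i\le s$ and $j\le r$, and with $\iota(\sigma)=e'\geq e$. Then there is an $e'$-superlarge set $S'\subseteq S$ such that $M\models\sigma(\mathbf{a})$ for every $\mathbf{a}\in S'$.
   Context: $\mathcal{L}$ is a countable first-order language containing a binary symbol $<$; $\mathcal{L}^S$ is $\mathcal{L}$ with Skolem function symbols, $T_{\mathrm{skolem}}$ the theory saying they are Skolem functions; "term" means $\mathcal{L}^S$-term. $\theta$ is a strongly inaccessible cardinal and $M$ is a model of $T_{\mathrm{skolem}}$ whose $\mathcal{L}$-reduct is a $\theta$-like model (cardinality $\theta$, every proper initial segment of cardinality $<\theta$) of a complete $\mathcal{L}$-theory $T$ in which $<$ is a linear order. Fix a chain $\langle M_i;i<\theta\rangle$ of $\mathcal{L}^S$-elementary submodels of $M$, each a proper initial segment of $M$, with $M_j$ an elementary end extension of $M_i$ for $i<j$, $M_\delta=\bigcup_{i<\delta}M_i$ for limit $\delta$, and $M=\bigcup_{i<\theta}M_i$. $F:M\to\theta$, $F(a)=$ least $i$ with $a\in M_i$. For $X\subseteq M$, $[X]^r$ is the set of strictly increasing $r$-sequences from $X$, and $[X]^\mu$ the set of subsets of $X$ of cardinality $\mu$. $[F]^{r,s}$ is the set of $\mathbf{x}=\langle\mathbf{x}_1,\dots,\mathbf{x}_s\rangle$ with $\mathbf{x}_i=\langle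 x_{i1},\dots,x_{ir}\rangle\in[M]^r$, $F(x_{ij})=F(x_{il})$ for all $i,j,l$, and $F(x_{11})<F(x_{21})<\dots<F(x_{s1})$. For $A\subseteq M$, $[F|A]^{r,s}=\{\mathbf{x}\in[F]^{r,s}: \text{all }x_{ij}\in A\}$. Game $G(S,e)$ for $S\subseteq[F]^{r,s}$, $1\le e\le s$, $f=s-e$: for $k=1,\dots,e$, player I chooses a cardinal $\mu_k<\theta$ and then II responds; for $k<e$ II chooses an ordinal $\beta_k<\theta$, and at his last move II chooses a sequence of ordinals $\langle\beta_{e+i};i<\theta\rangle$ below $\theta$ (with $i=0$ giving $\beta_e$). II wins iff $\beta_1<\dots<\beta_e<\beta_{e+1}<\dots$ and there are $X_k\in[F^{-1}(\beta_k)]^{\mu_k}$ ($1\le k\le e$) and $X_{e+i}\subseteq F^{-1}(\beta_{e+i})$ ($1\le i<\theta$) with $\sup\{|X_{e+i}|:1\le i<\theta\}=\theta$ and $\prod_{k=1}^e[X_k]^r\times[F|\bigcup_{1\le i<\theta}X_{e+i}]^{r,f}\subseteq S$ (for $f=0$ this reads $\prod_{k=1}^e[X_k]^r\subseteq S$). $S$ is $e$-superlarge iff II has a winning strategy in $G(S,e)$. $C^*=\{c_{ij}\mid i,j<\omega\}$ are new constants. A sentence of type $\Sigma^*(\mathrm{iv})$ is one of the form: if $\tau(c_{i_1j_1},\dots,c_{i_nj_n})<c_{uv}$ then $\tau(\bar c,c_{i_{m+1}j_{m+1}},\dots,c_{i_nj_n})=\tau(\bar c,c_{i_{m+1}l_{m+1}},\dots,c_{i_nl_n})$,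 where $\tau$ is a term, constants are from $C^*$, $c_{i_1j_1},\dots,c_{i_nj_n}$ are strictly increasing lexicographically (as is $\langle\bar c,c_{i_{m+1}l_{m+1}},\dots,c_{i_nl_n}\rangle$), $u<i_n$, $v,l_{m+1},\dots,l_n$ arbitrary, $m$ the smallest integer with $i_{m+1}>u$ and $\bar c=\langle c_{i_1j_1},\dots,c_{i_mj_m}\rangle$ (if there is no such $m$, the equation is $\tau(c_{i_1j_1},\dots,c_{i_nj_n})=\tau(c_{i_1l_1},\dots,c_{i_nl_n})$). For such $\sigma$, $\iota(\sigma)=i_n$. For $\mathbf{a}\in[F]^{r,s}$, $M\models\sigma(\mathbf{a})$ means $\sigma$ holds in $M$ when each $c_{ij}$ occurring in $\sigma$ is replaced by $a_{ij}$. *)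

theory Defs
  imports Main "HOL-Library.Countable_Set"
begin

text \<open>Function symbols of type 'f (all symbols of the Skolemized language L^S),
  relation symbols of type 'r (all belong to L).  Variables are natural numbers.\<close>

datatype 'f trm = Var nat | Fn 'f "'f trm list"

datatype ('f, 'r) fm =
    Eq "'f trm" "'f trm"
  | Rel 'r "'f trm list"
  | Neg "('f, 'r) fm"
  | Conj "('f, 'r) fm" "('f, 'r) fm"
  | Ex nat "('f, 'r) fm"

fun wf_trm :: "('f \<Rightarrow> nat) \<Rightarrow> 'f trm \<Rightarrow> bool" where
  "wf_trm ar (Var n) = True"
| "wf_trm ar (Fn f ts) = (length ts = ar f \<and> (\<forall>t\<in>set ts. wf_trm ar t))"

fun trm_vars :: "'f trm \<Rightarrow> nat set" where
  "trm_vars (Var n) = {n}"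
| "trm_vars (Fn f ts) = (\<Union>t\<in>set ts. trm_vars t)"

fun trm_syms :: "'f trm \<Rightarrow> 'f set" where
  "trm_syms (Var n) = {}"
| "trm_syms (Fn f ts) = insert f (\<Union>t\<in>set ts. trm_syms t)"

fun wf_fm :: "('f \<Rightarrow> nat) \<Rightarrow> ('r \<Rightarrow> nat) \<Rightarrow> ('f, 'r) fm \<Rightarrow> bool" where
  "wf_fm ar rar (Eq s t) = (wf_trm ar s \<and> wf_trm ar t)"
| "wf_fm ar rar (Rel R ts) = (length ts = rar R \<and> (\<forall>t\<in>set ts. wf_trm ar t))"
| "wf_fm ar rar (Neg \<phi>) = wf_fm ar rar \<phi>"
| "wf_fm ar rar (Conj \<phi> \<psi>) = (wf_fm ar rar \<phi> \<and> wf_fm ar rar \<psi>)"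
| "wf_fm ar rar (Ex n \<phi>) = wf_fm ar rar \<phi>"

fun fm_syms :: "('f, 'r) fm \<Rightarrow> 'f set" where
  "fm_syms (Eq s t) = trm_syms s \<union> trm_syms t"
| "fm_syms (Rel R ts) = (\<Union>t\<in>set ts. trm_syms t)"
| "fm_syms (Neg \<phi>) = fm_syms \<phi>"
| "fm_syms (Conj \<phi> \<psi>) = fm_syms \<phi> \<union> fm_syms \<psi>"
| "fm_syms (Ex n \<phi>) = fm_syms \<phi>"

fun fv :: "('f, 'r) fm \<Rightarrow> nat set" where
  "fv (Eq s t) = trm_vars s \<union> trm_vars t"
| "fv (Rel R ts) = (\<Union>t\<in>set ts. trm_vars t)"
| "fv (Neg \<phi>) = fv \<phi>"
| "fv (Conj \<phi> \<psi>) = fv \<phi> \<union> fv \<psi>"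
| "fv (Ex n \<phi>) = fv \<phi> - {n}"

fun teval :: "('f \<Rightarrow> 'm list \<Rightarrow> 'm) \<Rightarrow> (nat \<Rightarrow> 'm) \<Rightarrow> 'f trm \<Rightarrow> 'm" where
  "teval fI w (Var n) = w n"
| "teval fI w (Fn f ts) = fI f (map (teval fI w) ts)"

text \<open>Satisfaction, with quantifiers relativised to a set A of elements
  (A = UNIV gives satisfaction in M itself).\<close>

fun sat_in :: "'m set \<Rightarrow> ('f \<Rightarrow> 'm list \<Rightarrow> 'm) \<Rightarrow> ('r \<Rightarrow> 'm list \<Rightarrow> bool)
    \<Rightarrow> (nat \<Rightarrow> 'm) \<Rightarrow> ('f, 'r) fm \<Rightarrow> bool" where
  "sat_in A fI rI w (Eq s t) = (teval fI w s = teval fI w t)"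
| "sat_in A fI rI w (Rel R ts) = rI R (map (teval fI w) ts)"
| "sat_in A fI rI w (Neg \<phi>) = (\<not> sat_in A fI rI w \<phi>)"
| "sat_in A fI rI w (Conj \<phi> \<psi>) = (sat_in A fI rI w \<phi> \<and> sat_in A fI rI w \<psi>)"
| "sat_in A fI rI w (Ex n \<phi>) = (\<exists>a\<in>A. sat_in A fI rI (w(n := a)) \<phi>)"

definition elem_sub :: "('f \<Rightarrow> nat) \<Rightarrow> ('r \<Rightarrow> nat) \<Rightarrow> ('f \<Rightarrow> 'm list \<Rightarrow> 'm)
    \<Rightarrow> ('r \<Rightarrow> 'm list \<Rightarrow> bool) \<Rightarrow> 'm set \<Rightarrow> 'm set \<Rightarrow> bool" where
  "elem_sub ar rar fI rI A B \<longleftrightarrow>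
     A \<noteq> {} \<and> A \<subseteq> B \<and>
     (\<forall>f as. length as = ar f \<and> set as \<subseteq> A \<longrightarrow> fI f as \<in> A) \<and>
     (\<forall>\<phi> w. wf_fm ar rar \<phi> \<and> range w \<subseteq> A \<longrightarrow>
        (sat_in A fI rI w \<phi> \<longleftrightarrow> sat_in B fI rI w \<phi>))"

text \<open>M is a model of T_skolem: every L-formula \<exists>x \<phi> has a Skolem function symbol
  (a non-L symbol of arity = number of free variables of \<exists>x \<phi>, taken in
  increasing order) interpreted as a Skolem function in M, and every symbol not in
  L is such a Skolem function symbol for some L-formula.\<close>

definition is_skolem_for :: "('f \<Rightarrow> nat) \<Rightarrow> ('f \<Rightarrow> 'm list \<Rightarrow> 'm)
    \<Rightarrow> ('r \<Rightarrow> 'm list \<Rightarrow> bool) \<Rightarrow> 'f \<Rightarrow> nat \<Rightarrow> ('f, 'r) fm \<Rightarrow> bool" where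
  "is_skolem_for ar fI rI g x \<phi> \<longleftrightarrow>
     (let ys = sorted_list_of_set (fv (Ex x \<phi>)) in
       ar g = length ys \<and>
       (\<forall>w. sat_in UNIV fI rI w (Ex x \<phi>) \<longrightarrow>
            sat_in UNIV fI rI (w(x := fI g (map w ys))) \<phi>))"

definition skolem_model :: "('f \<Rightarrow> bool) \<Rightarrow> ('f \<Rightarrow> nat) \<Rightarrow> ('r \<Rightarrow> nat)
    \<Rightarrow> ('f \<Rightarrow> 'm list \<Rightarrow> 'm) \<Rightarrow> ('r \<Rightarrow> 'm list \<Rightarrow> bool) \<Rightarrow> bool" where
  "skolem_model isL ar rar fI rI \<longleftrightarrow>
     (\<forall>x \<phi>. wf_fm ar rar \<phi> \<and> fm_syms \<phi> \<subseteq> Collect isL \<longrightarrow>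
        (\<exists>g. \<not> isL g \<and> is_skolem_for ar fI rI g x \<phi>)) \<and>
     (\<forall>g. \<not> isL g \<longrightarrow>
        (\<exists>x \<phi>. wf_fm ar rar \<phi> \<and> fm_syms \<phi> \<subseteq> Collect isL \<and> is_skolem_for ar fI rI g x \<phi>))"

definition strict_linorder :: "('m \<Rightarrow> 'm \<Rightarrow> bool) \<Rightarrow> bool" where
  "strict_linorder lt \<longleftrightarrow> (\<forall>x. \<not> lt x x) \<and> (\<forall>x y z. lt x y \<and> lt y z \<longrightarrow> lt x z)
     \<and> (\<forall>x y. x \<noteq> y \<longrightarrow> lt x y \<or> lt y x)"

definition init_seg :: "('m \<Rightarrow> 'm \<Rightarrow> bool) \<Rightarrow> 'm set \<Rightarrow> 'm set \<Rightarrow> bool" where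
  "init_seg lt A B \<longleftrightarrow> A \<subseteq> B \<and> (\<forall>a\<in>A. \<forall>b\<in>B. lt b a \<longrightarrow> b \<in> A)"

text \<open>The type 'o with its well-order represents the cardinal theta (as an initial
  ordinal): its elements are the ordinals below theta.\<close>

definition ozero :: "'o::wellorder" where "ozero = (LEAST i. True)"

definition olimit :: "'o::wellorder \<Rightarrow> bool" where
  "olimit d \<longleftrightarrow> d \<noteq> ozero \<and> (\<forall>i<d. \<exists>j. i < j \<and> j < d)"

definition strongly_inaccessible_type :: "'o::wellorder itself \<Rightarrow> bool" where
  "strongly_inaccessible_type _ \<longleftrightarrow>
     \<comment> \<open>the order type of 'o is an initial ordinal (a cardinal)\<close>
     (\<forall>i::'o. (card_of {j. j < i}, card_of (UNIV :: 'o set)) \<in> ordLess) \<and>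
     \<comment> \<open>uncountable\<close>
     \<not> countable (UNIV :: 'o set) \<and>
     \<comment> \<open>regular\<close>
     (\<forall>A::'o set. (card_of A, card_of (UNIV :: 'o set)) \<in> ordLess \<longrightarrow> (\<exists>i. \<forall>a\<in>A. a < i)) \<and>
     \<comment> \<open>strong limit\<close>
     (\<forall>A::'o set. (card_of A, card_of (UNIV :: 'o set)) \<in> ordLess \<longrightarrow>
        (card_of (Pow A), card_of (UNIV :: 'o set)) \<in> ordLess)"

definition theta_like :: "('m \<Rightarrow> 'm \<Rightarrow> bool) \<Rightarrow> 'o itself \<Rightarrow> bool" where
  "theta_like lt _ \<longleftrightarrow> (card_of (UNIV :: 'm set), card_of (UNIV :: 'o set)) \<in> ordIso \<and>
     (\<forall>I. init_seg lt I UNIV \<and> I \<noteq> UNIV \<longrightarrow> (card_of I, card_of (UNIV :: 'o set)) \<in> ordLess)"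

definition Fidx :: "('o::wellorder \<Rightarrow> 'm set) \<Rightarrow> 'm \<Rightarrow> 'o" where
  "Fidx Mc a = (LEAST i. a \<in> Mc i)"

text \<open>Elements of [F]^{r,s} are lists x of length s of lists of length r;
  x_{ij} is  x ! (i-1) ! (j-1).\<close>

definition incr_seqs :: "('m \<Rightarrow> 'm \<Rightarrow> bool) \<Rightarrow> nat \<Rightarrow> 'm set \<Rightarrow> 'm list set" where
  "incr_seqs lt r X = {xs. length xs = r \<and> set xs \<subseteq> X \<and> sorted_wrt lt xs}"

definition Fblocks :: "('m \<Rightarrow> 'm \<Rightarrow> bool) \<Rightarrow> ('m \<Rightarrow> 'o::wellorder) \<Rightarrow> nat \<Rightarrow> nat
    \<Rightarrow> 'm set \<Rightarrow> 'm list list set" where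
  "Fblocks lt F r s A = {x. length x = s \<and>
     (\<forall>i<s. x ! i \<in> incr_seqs lt r A) \<and>
     (\<forall>i<s. \<forall>j<r. \<forall>l<r. F (x ! i ! j) = F (x ! i ! l)) \<and>
     (\<forall>i. Suc i < s \<longrightarrow> F (x ! i ! 0) < F (x ! Suc i ! 0))}"

text \<open>A cardinal \<mu> < theta chosen by player I is represented by an ordinal
  m < theta, with \<mu> = |m| = card_of {j. j < m}; every cardinal below theta
  arises this way.  A strategy for II maps the history of I's moves
  (\<mu>_1,...,\<mu>_k) to II's answer: for k < e the value at ozero is \<beta>_k; for
  k = e the whole function i \<mapsto> \<beta>_{e+i} (i < theta, i = 0 giving \<beta>_e).
  Since the game is finite with perfect information, II has a winning strategy iff
  there is such a function winning against all sequences of moves of I.\<close>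

definition II_wins :: "('m \<Rightarrow> 'm \<Rightarrow> bool) \<Rightarrow> ('m \<Rightarrow> 'o::wellorder) \<Rightarrow> nat \<Rightarrow> nat \<Rightarrow> nat
    \<Rightarrow> 'm list list set \<Rightarrow> 'o list \<Rightarrow> (nat \<Rightarrow> 'o) \<Rightarrow> ('o \<Rightarrow> 'o) \<Rightarrow> bool" where
  "II_wins lt F r s e S mus bet tail \<longleftrightarrow>
     (\<forall>k. 1 \<le> k \<and> k < e \<longrightarrow> bet k < bet (Suc k)) \<and>
     bet e = tail ozero \<and> strict_mono tail \<and>
     (\<exists>X :: nat \<Rightarrow> 'm set. \<exists>Y :: 'o \<Rightarrow> 'm set.
        (\<forall>k\<in>{1..e}. X k \<subseteq> {a. F a = bet k} \<and>
             (card_of (X k), card_of {j. j < mus ! (k - 1)}) \<in> ordIso) \<and>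
        (\<forall>i. i \<noteq> ozero \<longrightarrow> Y i \<subseteq> {a. F a = tail i}) \<and>
        (\<forall>m::'o. \<exists>i. i \<noteq> ozero \<and> (card_of {j. j < m}, card_of (Y i)) \<in> ordLeq) \<and>
        (\<forall>x. length x = s \<and> (\<forall>k\<in>{1..e}. x ! (k - 1) \<in> incr_seqs lt r (X k)) \<and>
             drop e x \<in> Fblocks lt F r (s - e) (\<Union>i\<in>{i. i \<noteq> ozero}. Y i)
             \<longrightarrow> x \<in> S))"

definition superlarge :: "('m \<Rightarrow> 'm \<Rightarrow> bool) \<Rightarrow> ('m \<Rightarrow> 'o::wellorder) \<Rightarrow> nat \<Rightarrow> nat \<Rightarrow> nat
    \<Rightarrow> 'm list list set \<Rightarrow> bool" where
  "superlarge lt F r s e S \<longleftrightarrow>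
     S \<subseteq> Fblocks lt F r s UNIV \<and>
     (\<exists>strat :: 'o list \<Rightarrow> 'o \<Rightarrow> 'o. \<forall>mus. length mus = e \<longrightarrow>
        II_wins lt F r s e S mus (\<lambda>k. strat (take k mus) ozero) (strat mus))"

text \<open>A sentence of type Sigma*(iv) is given by a term tau whose variables
  0,...,n-1 stand for the constants c_{i_1 j_1},...,c_{i_n j_n} (list cs of index
  pairs), the constant c_{uv}, and the list ls = l_{m+1},...,l_n.\<close>

definition lexless :: "nat \<times> nat \<Rightarrow> nat \<times> nat \<Rightarrow> bool" where
  "lexless p q \<longleftrightarrow> fst p < fst q \<or> (fst p = fst q \<and> snd p < snd q)"

definition sig_m :: "(nat \<times> nat) list \<Rightarrow> nat \<Rightarrow> nat" where
  "sig_m cs u = length (takeWhile (\<lambda>c. fst c \<le> u) cs)"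

definition sig_cs' :: "(nat \<times> nat) list \<Rightarrow> nat \<Rightarrow> nat list \<Rightarrow> (nat \<times> nat) list" where
  "sig_cs' cs u ls = take (sig_m cs u) cs @ zip (map fst (drop (sig_m cs u) cs)) ls"

definition sigma_iv :: "('f \<Rightarrow> nat) \<Rightarrow> 'f trm \<Rightarrow> (nat \<times> nat) list \<Rightarrow> nat \<Rightarrow> nat \<Rightarrow> nat list \<Rightarrow> bool" where
  "sigma_iv ar tau cs u v ls \<longleftrightarrow>
     wf_trm ar tau \<and> trm_vars tau \<subseteq> {..<length cs} \<and>
     cs \<noteq> [] \<and> sorted_wrt lexless cs \<and> u < fst (last cs) \<and>
     length ls = length cs - sig_m cs u \<and>
     sorted_wrt lexless (sig_cs' cs u ls)"

definition iota :: "(nat \<times> nat) list \<Rightarrow> nat" where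
  "iota cs = fst (last cs)"

definition consts_bounded :: "nat \<Rightarrow> nat \<Rightarrow> (nat \<times> nat) list \<Rightarrow> nat \<Rightarrow> nat \<Rightarrow> nat list \<Rightarrow> bool" where
  "consts_bounded r s cs u v ls \<longleftrightarrow>
     (\<forall>(i, j)\<in>insert (u, v) (set cs \<union> set (sig_cs' cs u ls)).
        1 \<le> i \<and> i \<le> s \<and> 1 \<le> j \<and> j \<le> r)"

definition cval :: "'m list list \<Rightarrow> nat \<times> nat \<Rightarrow> 'm" where
  "cval x c = x ! (fst c - 1) ! (snd c - 1)"

definition sat_sigma :: "('f \<Rightarrow> 'm list \<Rightarrow> 'm) \<Rightarrow> ('m \<Rightarrow> 'm \<Rightarrow> bool) \<Rightarrow> 'f trm
    \<Rightarrow> (nat \<times> nat) list \<Rightarrow> nat \<Rightarrow> nat \<Rightarrow> nat list \<Rightarrow> 'm list list \<Rightarrow> bool" where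
  "sat_sigma fI lt tau cs u v ls x \<longleftrightarrow>
     (let lhs = teval fI (\<lambda>k. cval x (cs ! k)) tau;
          rhs = teval fI (\<lambda>k. cval x (sig_cs' cs u ls ! k)) tau
      in lt lhs (cval x (u, v)) \<longrightarrow> lhs = rhs)"

end

theory Submission
  imports Defs
begin

unbundle cardinal_syntax

definition smallT :: "'o::wellorder itself \<Rightarrow> 'a set \<Rightarrow> bool" where
  "smallT _ A \<longleftrightarrow> |A| <o |UNIV::'o set|"

lemma card_of_Pow_mono': "|A| \<le>o |B| \<Longrightarrow> |Pow A| \<le>o |Pow B|"
proof -
  assume "|A| \<le>o |B|"
  then obtain f where f: "inj_on f A" "f ` A \<subseteq> B" using card_of_ordLeq[of A B] by auto
  have "inj_on (image f) (Pow A)" using f(1) by (auto simp: inj_on_def inj_on_image_eq_iff)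
  moreover have "image f ` Pow A \<subseteq> Pow B" using f(2) by auto
  ultimately show ?thesis using card_of_ordLeq by blast
qed

locale inac =
  fixes T :: "'o::wellorder itself"
  assumes inacc: "strongly_inaccessible_type T"
begin

abbreviation small :: "'a set \<Rightarrow> bool" where "small \<equiv> smallT T"

lemma small_def: "small A \<longleftrightarrow> |A| <o |UNIV::'o set|"
  by (simp add: smallT_def)

lemma inacc_unf: "(\<forall>i::'o. (card_of {j. j < i}, card_of (UNIV :: 'o set)) \<in> ordLess) \<and>
     \<not> countable (UNIV :: 'o set) \<and>
     (\<forall>A::'o set. (card_of A, card_of (UNIV :: 'o set)) \<in> ordLess \<longrightarrow> (\<exists>i. \<forall>a\<in>A. a < i)) \<and>
     (\<forall>A::'o set. (card_of A, card_of (UNIV :: 'o set)) \<in> ordLess \<longrightarrow>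
        (card_of (Pow A), card_of (UNIV :: 'o set)) \<in> ordLess)"
  using inacc unfolding strongly_inaccessible_type_def by assumption

lemma init_small: "small {j::'o. j < i}"
  unfolding small_def using inacc_unf by (elim conjE) (erule allE)

lemma theta_inf: "infinite (UNIV::'o set)"
proof
  assume "finite (UNIV::'o set)"
  hence "countable (UNIV::'o set)" by (rule countable_finite)
  thus False using inacc_unf by (elim conjE) simp
qed

lemma small_bounded_o: "small (A::'o set) \<Longrightarrow> \<exists>i. \<forall>a\<in>A. a < i"
  unfolding small_def using inacc_unf by (elim conjE) (erule allE, erule mp)

lemma small_Pow_o: "small (A::'o set) \<Longrightarrow> small (Pow A)"
  unfolding small_def using inacc_unf by (elim conjE) (erule allE, erule mp)

lemma small_leq: "|B| \<le>o |A| \<Longrightarrow> small A \<Longrightarrow> small B"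
  unfolding small_def using ordLeq_ordLess_trans by blast

lemma small_mono: "B \<subseteq> A \<Longrightarrow> small A \<Longrightarrow> small B"
  by (erule small_leq[OF card_of_mono1])

lemma small_image: "small A \<Longrightarrow> small (f ` A)"
  by (rule small_leq[OF card_of_image])

lemma small_finite: "finite A \<Longrightarrow> small A"
  unfolding small_def
  by (rule finite_ordLess_infinite[OF card_of_Well_order card_of_Well_order])
     (simp_all add: theta_inf Field_card_of)

lemma small_Un: "small A \<Longrightarrow> small B \<Longrightarrow> small (A \<union> B)"
  unfolding small_def by (rule card_of_Un_ordLess_infinite[OF theta_inf])

lemma small_insert: "small A \<Longrightarrow> small (insert a A)"
proof -
  assume "small A"
  moreover have "small {a}" by (rule small_finite) simp
  ultimately have "small ({a} \<union> A)" by (rule small_Un[rotated])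
  thus ?thesis by simp
qed

lemma small_inj_o: "small A \<Longrightarrow> \<exists>i::'o. |A| \<le>o |{j. j < i}|"
proof -
  assume a: "small A"
  hence "|A| \<le>o |UNIV::'o set|" unfolding small_def using ordLess_imp_ordLeq by blast
  then obtain f :: "_ \<Rightarrow> 'o" where f: "inj_on f A" using card_of_ordLeq[of A "UNIV::'o set"] by auto
  have "small (f ` A)" using a small_image by blast
  then obtain i where i: "\<forall>x\<in>f ` A. x < i" using small_bounded_o by blast
  hence "f ` A \<subseteq> {j. j < i}" by auto
  thus ?thesis using f card_of_ordLeq by blast
qed

lemma small_Pow: "small A \<Longrightarrow> small (Pow A)"
proof -
  assume a: "small A"
  then obtain i::'o where i: "|A| \<le>o |{j. j < i}|" using small_inj_o by blast
  hence "|Pow A| \<le>o |Pow {j. j < i}|" by (rule card_of_Pow_mono')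
  thus ?thesis using small_Pow_o[OF init_small] small_leq by blast
qed

lemma small_lt: "small A \<Longrightarrow> \<exists>l::'o. |A| <o |{j. j < l}|"
proof -
  assume "small A"
  hence "small (Pow A)" by (rule small_Pow)
  then obtain l::'o where "|Pow A| \<le>o |{j. j < l}|" using small_inj_o by blast
  thus ?thesis using card_of_Pow[of A] ordLess_ordLeq_trans by blast
qed

lemma small_Plus: "small A \<Longrightarrow> small B \<Longrightarrow> small (A <+> B)"
  unfolding small_def by (rule card_of_Plus_ordLess_infinite[OF theta_inf])

lemma small_Times: "small A \<Longrightarrow> small B \<Longrightarrow> small (A \<times> B)"
proof -
  assume a: "small A" "small B"
  have "small (Pow (A <+> B))" using a small_Plus small_Pow by blast
  moreover have "inj_on (\<lambda>(a,b). {Inl a, Inr b}) (A \<times> B)" by (rule inj_onI) (auto simp: doubleton_eq_iff)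
  moreover have "(\<lambda>(a,b). {Inl a, Inr b}) ` (A \<times> B) \<subseteq> Pow (A <+> B)" by auto
  ultimately have "|A \<times> B| \<le>o |Pow (A <+> B)|" using card_of_ordLeq[of "A \<times> B" "Pow (A <+> B)"] by blast
  thus ?thesis using \<open>small (Pow (A <+> B))\<close> small_leq by blast
qed

lemma small_lists: "small A \<Longrightarrow> small {xs. set xs \<subseteq> A \<and> length xs \<le> N}"
proof (induction N)
  case 0
  have "{xs. set xs \<subseteq> A \<and> length xs \<le> 0} \<subseteq> {[]}" by auto
  then show ?case using small_finite[of "{[]}"] small_mono by blast
next
  case (Suc N)
  have "{xs. set xs \<subseteq> A \<and> length xs \<le> Suc N} \<subseteq>
        insert [] ((\<lambda>(a,xs). a # xs) ` (A \<times> {xs. set xs \<subseteq> A \<and> length xs \<le> N}))"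
  proof
    fix xs assume "xs \<in> {xs. set xs \<subseteq> A \<and> length xs \<le> Suc N}"
    thus "xs \<in> insert [] ((\<lambda>(a,xs). a # xs) ` (A \<times> {xs. set xs \<subseteq> A \<and> length xs \<le> N}))"
      by (cases xs) auto
  qed
  moreover have "small (insert [] ((\<lambda>(a,xs). a # xs) ` (A \<times> {xs. set xs \<subseteq> A \<and> length xs \<le> N})))"
  proof -
    have "small (A \<times> {xs. set xs \<subseteq> A \<and> length xs \<le> N})" using Suc.IH Suc.prems by (simp add: small_Times)
    thus ?thesis by (intro small_insert small_image)
  qed
  ultimately show ?case by (rule small_mono)
qed

lemma small_ex_subset: "|A| \<le>o |B| \<Longrightarrow> \<exists>B'\<subseteq>B. |B'| =o |A|"
proof -
  assume "|A| \<le>o |B|"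
  then obtain f where f: "inj_on f A" "f ` A \<subseteq> B" using card_of_ordLeq[of A B] by auto
  hence "bij_betw f A (f ` A)" by (simp add: bij_betw_imageI)
  hence "|A| =o |f ` A|" by (rule card_of_ordIsoI)
  hence "|f ` A| =o |A|" by (rule ordIso_symmetric)
  thus ?thesis using f by blast
qed

lemma small_funs:
  assumes "small D" "small K"
  shows "small {f. \<forall>x. (x \<in> D \<longrightarrow> f x \<in> K) \<and> (x \<notin> D \<longrightarrow> f x = d)}"
proof -
  let ?F = "{f. \<forall>x. (x \<in> D \<longrightarrow> f x \<in> K) \<and> (x \<notin> D \<longrightarrow> f x = d)}"
  let ?g = "\<lambda>f. (\<lambda>x. (x, f x)) ` D"
  have "inj_on ?g ?F"
  proof (rule inj_onI)
    fix f1 f2 assume f: "f1 \<in> ?F" "f2 \<in> ?F" "?g f1 = ?g f2"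
    show "f1 = f2"
    proof
      fix x show "f1 x = f2 x"
      proof (cases "x \<in> D")
        case True
        hence "(x, f1 x) \<in> ?g f2" using f(3) by auto
        then show ?thesis by auto
      next
        case False then show ?thesis using f(1,2) by auto
      qed
    qed
  qed
  moreover have "?g ` ?F \<subseteq> Pow (D \<times> K)" by auto
  moreover have "small (Pow (D \<times> K))" using assms small_Times small_Pow by blast
  ultimately have "|?F| \<le>o |Pow (D \<times> K)|" using card_of_ordLeq[of ?F "Pow (D \<times> K)"] by blast
  thus ?thesis using \<open>small (Pow (D \<times> K))\<close> small_leq by blast
qed

end

unbundle cardinal_syntax

definition enum :: "'o::wellorder set \<Rightarrow> 'o \<Rightarrow> 'o" where
  "enum A = wfrec {(x,y). x < y} (\<lambda>f \<beta>. LEAST y. y \<in> A \<and> (\<forall>\<gamma><\<beta>. f \<gamma> < y))"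

lemma enum_eq: "enum A \<beta> = (LEAST y. y \<in> A \<and> (\<forall>\<gamma><\<beta>. enum A \<gamma> < y))"
proof -
  have "enum A \<beta> = (LEAST y. y \<in> A \<and> (\<forall>\<gamma><\<beta>. cut (enum A) {(x,y). x < y} \<beta> \<gamma> < y))"
    unfolding enum_def by (subst wfrec[OF wf]) (rule refl)
  also have "\<dots> = (LEAST y. y \<in> A \<and> (\<forall>\<gamma><\<beta>. enum A \<gamma> < y))"
    by (rule arg_cong[where f=Least]) (auto simp: cut_apply fun_eq_iff)
  finally show ?thesis .
qed

definition domE :: "'o::wellorder set \<Rightarrow> 'o \<Rightarrow> bool" where
  "domE A \<beta> \<longleftrightarrow> (\<exists>y\<in>A. \<forall>\<gamma><\<beta>. enum A \<gamma> < y)"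

lemma enum_in: "domE A \<beta> \<Longrightarrow> enum A \<beta> \<in> A \<and> (\<forall>\<gamma><\<beta>. enum A \<gamma> < enum A \<beta>)"
  unfolding domE_def enum_eq[of A \<beta>] by (elim bexE) (rule LeastI, blast)

lemma enum_le: "y \<in> A \<Longrightarrow> \<forall>\<gamma><\<beta>. enum A \<gamma> < y \<Longrightarrow> enum A \<beta> \<le> y"
  unfolding enum_eq[of A \<beta>] by (rule Least_le) blast

lemma domE_down: "\<gamma> \<le> \<beta> \<Longrightarrow> domE A \<beta> \<Longrightarrow> domE A \<gamma>"
  unfolding domE_def by (meson less_le_trans)

lemma enum_mono: "\<gamma> < \<beta> \<Longrightarrow> domE A \<beta> \<Longrightarrow> enum A \<gamma> < enum A \<beta>"
  using enum_in by blast

lemma enum_mono_iff: "domE A \<beta> \<Longrightarrow> domE A \<gamma> \<Longrightarrow> enum A \<gamma> < enum A \<beta> \<longleftrightarrow> \<gamma> < \<beta>"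
  by (metis enum_mono linorder_neqE not_less_iff_gr_or_eq)

lemma enum_inj: "domE A \<beta> \<Longrightarrow> domE A \<gamma> \<Longrightarrow> enum A \<gamma> = enum A \<beta> \<longleftrightarrow> \<gamma> = \<beta>"
  by (metis enum_mono linorder_neqE less_irrefl)

lemma enum_not_hit:
  assumes "y \<in> A" "\<forall>\<beta>. domE A \<beta> \<longrightarrow> enum A \<beta> \<noteq> y"
  shows "domE A \<beta> \<and> enum A \<beta> < y"
proof (induction \<beta> rule: less_induct)
  case (less \<beta>)
  hence h: "\<forall>\<gamma><\<beta>. enum A \<gamma> < y" by blast
  hence d: "domE A \<beta>" unfolding domE_def using assms(1) by blast
  have "enum A \<beta> \<le> y" using enum_le[OF assms(1) h] .
  moreover have "enum A \<beta> \<noteq> y" using assms(2) d by blast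
  ultimately show ?case using d by simp
qed

definition delta :: "'o::wellorder set \<Rightarrow> 'o" where
  "delta A = (LEAST \<beta>. \<not> domE A \<beta>)"

context inac
begin

lemma enum_onto:
  assumes "y \<in> (A::'o set)"
  shows "\<exists>\<beta>. domE A \<beta> \<and> enum A \<beta> = y"
proof (rule ccontr)
  assume "\<not> ?thesis"
  hence h: "\<forall>\<beta>. domE A \<beta> \<and> enum A \<beta> < y" using enum_not_hit[OF assms] by blast
  have "inj (enum A)"
  proof (rule injI)
    fix a b assume "enum A a = enum A b"
    thus "a = b" using enum_inj h by blast
  qed
  moreover have "range (enum A) \<subseteq> {j. j < y}" using h by blast
  ultimately have "|UNIV::'o set| \<le>o |{j. j < y}|" using card_of_ordLeq by blast
  thus False using init_small[of y] unfolding small_def using not_ordLess_ordLeq by blast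
qed

lemma small_not_all_dom:
  assumes "small (A::'o set)"
  shows "\<exists>\<beta>. \<not> domE A \<beta>"
proof (rule ccontr)
  assume "\<not> ?thesis"
  hence h: "\<forall>\<beta>. domE A \<beta>" by blast
  have "inj (enum A)"
  proof (rule injI)
    fix a b assume "enum A a = enum A b"
    thus "a = b" using enum_inj h by blast
  qed
  moreover have "range (enum A) \<subseteq> A" using h enum_in by blast
  ultimately have "|UNIV::'o set| \<le>o |A|" using card_of_ordLeq by blast
  thus False using assms unfolding small_def using not_ordLess_ordLeq by blast
qed

lemma domE_iff_delta:
  assumes "small (A::'o set)"
  shows "domE A \<beta> \<longleftrightarrow> \<beta> < delta A"
proof
  assume d: "domE A \<beta>"
  show "\<beta> < delta A"
  proof (rule ccontr)
    assume "\<not> \<beta> < delta A"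
    hence "delta A \<le> \<beta>" by simp
    hence "domE A (delta A)" using domE_down d by blast
    moreover have "\<not> domE A (delta A)" unfolding delta_def
      using small_not_all_dom[OF assms] by (rule LeastI_ex)
    ultimately show False by blast
  qed
next
  assume "\<beta> < delta A"
  thus "domE A \<beta>" unfolding delta_def using not_less_Least by blast
qed

lemma enum_image_delta:
  assumes "small (A::'o set)"
  shows "enum A ` {\<beta>. \<beta> < delta A} = A"
  using enum_onto enum_in domE_iff_delta[OF assms] by blast

lemma enum_below:
  assumes "small (A::'o set)" "\<beta> < delta A"
  shows "A \<inter> {z. z < enum A \<beta>} = enum A ` {\<gamma>. \<gamma> < \<beta>}"
proof
  show "A \<inter> {z. z < enum A \<beta>} \<subseteq> enum A ` {\<gamma>. \<gamma> < \<beta>}"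
  proof
    fix z assume z: "z \<in> A \<inter> {z. z < enum A \<beta>}"
    then obtain \<gamma> where g: "domE A \<gamma>" "enum A \<gamma> = z" using enum_onto by blast
    have "domE A \<beta>" using domE_iff_delta[OF assms(1)] assms(2) by blast
    hence "\<gamma> < \<beta>" using enum_mono_iff[OF _ g(1)] z g(2) by blast
    thus "z \<in> enum A ` {\<gamma>. \<gamma> < \<beta>}" using g(2) by blast
  qed
next
  have "domE A \<beta>" using domE_iff_delta[OF assms(1)] assms(2) by blast
  show "enum A ` {\<gamma>. \<gamma> < \<beta>} \<subseteq> A \<inter> {z. z < enum A \<beta>}"
  proof
    fix z assume "z \<in> enum A ` {\<gamma>. \<gamma> < \<beta>}"
    then obtain \<gamma> where g: "\<gamma> < \<beta>" "z = enum A \<gamma>" by blast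
    hence "domE A \<gamma>" using domE_down[OF less_imp_le[OF g(1)] \<open>domE A \<beta>\<close>] by blast
    thus "z \<in> A \<inter> {z. z < enum A \<beta>}" using enum_in enum_mono[OF g(1) \<open>domE A \<beta>\<close>] g(2) by blast
  qed
qed

lemma card_delta:
  assumes "small (A::'o set)"
  shows "|{\<beta>. \<beta> < delta A}| =o |A|"
proof -
  have "inj_on (enum A) {\<beta>. \<beta> < delta A}"
    by (rule inj_onI) (use enum_inj domE_iff_delta[OF assms] in blast)
  hence "bij_betw (enum A) {\<beta>. \<beta> < delta A} A"
    using enum_image_delta[OF assms] by (simp add: bij_betw_def)
  thus ?thesis by (rule card_of_ordIsoI)
qed

lemma notsmall_all_dom:
  assumes "\<not> small (A::'o set)"
  shows "domE A \<beta>"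
proof (rule ccontr)
  assume nd: "\<not> domE A \<beta>"
  define d where "d = (LEAST \<beta>. \<not> domE A \<beta>)"
  have nd': "\<not> domE A d" unfolding d_def using nd by (rule LeastI)
  have "A \<subseteq> enum A ` {\<gamma>. \<gamma> < d}"
  proof
    fix y assume "y \<in> A"
    then obtain \<gamma> where g: "domE A \<gamma>" "enum A \<gamma> = y" using enum_onto by blast
    have "\<gamma> < d" using g(1) nd' domE_down by (metis linorder_not_less)
    thus "y \<in> enum A ` {\<gamma>. \<gamma> < d}" using g by blast
  qed
  hence "small A" using small_mono small_image init_small by metis
  thus False using assms by blast
qed

lemma not_small_ge: "\<not> small {j::'o. i \<le> j}"
proof
  assume "small {j::'o. i \<le> j}"
  hence "small ({j. j < i} \<union> {j::'o. i \<le> j})" using init_small small_Un by blast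
  moreover have "{j. j < i} \<union> {j::'o. i \<le> j} = UNIV" by auto
  ultimately have "small (UNIV::'o set)" by simp
  thus False unfolding small_def using ordLess_irreflexive by blast
qed

end

unbundle cardinal_syntax

definition PT :: "'o::wellorder set \<Rightarrow> ('o set \<Rightarrow> 'c) \<Rightarrow> nat \<Rightarrow> 'o \<Rightarrow> 'o set" where
  "PT X c n = wfrec {(x,y). x < y} (\<lambda>f x. {y \<in> X. y < x \<and>
      (\<forall>s. s \<subseteq> f y \<and> finite s \<and> card s = n \<longrightarrow> c (insert y s) = c (insert x s))})"

lemma PT_eq: "PT X c n x = {y \<in> X. y < x \<and>
      (\<forall>s. s \<subseteq> PT X c n y \<and> finite s \<and> card s = n \<longrightarrow> c (insert y s) = c (insert x s))}"
proof -
  have "PT X c n x = {y \<in> X. y < x \<and>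
      (\<forall>s. s \<subseteq> cut (PT X c n) {(x,y). x < y} x y \<and> finite s \<and> card s = n \<longrightarrow> c (insert y s) = c (insert x s))}"
    unfolding PT_def by (subst wfrec[OF wf]) (rule refl)
  also have "\<dots> = {y \<in> X. y < x \<and>
      (\<forall>s. s \<subseteq> PT X c n y \<and> finite s \<and> card s = n \<longrightarrow> c (insert y s) = c (insert x s))}"
    by (auto simp: cut_apply)
  finally show ?thesis .
qed

context
  fixes X :: "'o::wellorder set" and c :: "'o set \<Rightarrow> 'c" and n :: nat
begin

abbreviation Pc where "Pc \<equiv> PT X c n"

lemma P_sub: "y \<in> Pc x \<Longrightarrow> y \<in> X \<and> y < x"
  by (subst (asm) PT_eq) blast

lemma P_hom0: "y \<in> Pc x \<Longrightarrow> s \<subseteq> Pc y \<Longrightarrow> finite s \<Longrightarrow> card s = n \<Longrightarrow> c (insert y s) = c (insert x s)"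
  by (subst (asm) PT_eq) blast

lemma P_intro: "y \<in> X \<Longrightarrow> y < x \<Longrightarrow> (\<And>s. s \<subseteq> Pc y \<Longrightarrow> finite s \<Longrightarrow> card s = n \<Longrightarrow> c (insert y s) = c (insert x s))
   \<Longrightarrow> y \<in> Pc x"
  by (subst PT_eq) blast

lemma P_trans: "y \<in> Pc x \<Longrightarrow> Pc y \<subseteq> Pc x"
proof (induction y arbitrary: x rule: less_induct)
  case (less y)
  show ?case
  proof
    fix z assume z: "z \<in> Pc y"
    have zy: "z \<in> X" "z < y" using P_sub[OF z] by auto
    have IH: "Pc z \<subseteq> Pc y" using less.IH[OF zy(2) z] .
    have yx: "y < x" using P_sub[OF less.prems] by simp
    show "z \<in> Pc x"
    proof (rule P_intro)
      show "z \<in> X" by fact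
      show "z < x" using zy(2) yx by simp
      fix s assume s: "s \<subseteq> Pc z" "finite s" "card s = n"
      have "c (insert z s) = c (insert y s)" using P_hom0[OF z s] .
      also have "\<dots> = c (insert x s)" using P_hom0[OF less.prems _ s(2,3)] s(1) IH by blast
      finally show "c (insert z s) = c (insert x s)" .
    qed
  qed
qed

lemma P_lin: "y \<in> Pc x \<Longrightarrow> z \<in> Pc x \<Longrightarrow> z < y \<Longrightarrow> z \<in> Pc y"
proof (induction z rule: less_induct)
  case (less z)
  show ?case
  proof (rule P_intro)
    show "z \<in> X" using P_sub[OF less.prems(2)] by simp
    show "z < y" by fact
    fix s assume s: "s \<subseteq> Pc z" "finite s" "card s = n"
    have sy: "s \<subseteq> Pc y"
    proof
      fix w assume w: "w \<in> s"
      have wz: "w \<in> Pc z" using w s(1) by blast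
      have "w \<in> Pc x" using P_trans[OF less.prems(2)] wz by blast
      moreover have "w < z" using P_sub[OF wz] by simp
      ultimately show "w \<in> Pc y" using less.IH[OF \<open>w < z\<close> less.prems(1)] less.prems(3) by simp
    qed
    have "c (insert z s) = c (insert x s)" using P_hom0[OF less.prems(2) s] .
    also have "\<dots> = c (insert y s)" using P_hom0[OF less.prems(1) sy s(2,3)] by simp
    finally show "c (insert z s) = c (insert y s)" .
  qed
qed

lemma P_below: "y \<in> insert x (Pc x) \<Longrightarrow> Pc y = insert x (Pc x) \<inter> {w. w < y}"
proof (cases "y = x")
  case True
  then show ?thesis using P_sub by auto
next
  case False
  assume y: "y \<in> insert x (Pc x)"
  hence y': "y \<in> Pc x" using False by simp
  have yx: "y < x" using P_sub[OF y'] by simp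
  show ?thesis
  proof
    show "Pc y \<subseteq> insert x (Pc x) \<inter> {w. w < y}" using P_trans[OF y'] P_sub by blast
    show "insert x (Pc x) \<inter> {w. w < y} \<subseteq> Pc y"
    proof
      fix w assume "w \<in> insert x (Pc x) \<inter> {w. w < y}"
      hence "w \<in> Pc x" "w < y" using yx by auto
      thus "w \<in> Pc y" using P_lin[OF y'] by blast
    qed
  qed
qed

lemma P_hom: "y \<in> Pc x \<Longrightarrow> s \<subseteq> Pc x \<Longrightarrow> \<forall>w\<in>s. w < y \<Longrightarrow> finite s \<Longrightarrow> card s = n
   \<Longrightarrow> c (insert y s) = c (insert x s)"
proof -
  assume a: "y \<in> Pc x" "s \<subseteq> Pc x" "\<forall>w\<in>s. w < y" "finite s" "card s = n"
  have "s \<subseteq> Pc y" using a(1,2,3) P_lin by blast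
  thus ?thesis using P_hom0[OF a(1)] a(4,5) by blast
qed

end


unbundle cardinal_syntax

context inac
begin

definition Gc :: "('o set \<Rightarrow> 'c) \<Rightarrow> nat \<Rightarrow> 'o set \<Rightarrow> 'o set \<Rightarrow> 'c" where
  "Gc c n A S = (if S \<subseteq> {\<beta>. \<beta> < delta A} \<and> finite S \<and> card S = Suc n then c (enum A ` S) else undefined)"

lemma code_inj:
  fixes X :: "'o set" and c :: "'o set \<Rightarrow> 'c" and n :: nat
  defines "A \<equiv> \<lambda>x. insert x (PT X c n x)"
  assumes x: "x1 \<in> X" "x2 \<in> X" and sm: "small (A x1)" "small (A x2)"
    and dl: "delta (A x1) = delta (A x2)" and G: "Gc c n (A x1) = Gc c n (A x2)"
  shows "x1 = x2"
proof -
  define d where "d = delta (A x1)"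
  define e1 where "e1 = enum (A x1)"
  define e2 where "e2 = enum (A x2)"
  have dom1: "\<And>\<beta>. domE (A x1) \<beta> \<longleftrightarrow> \<beta> < d" using domE_iff_delta[OF sm(1)] d_def by simp
  have dom2: "\<And>\<beta>. domE (A x2) \<beta> \<longleftrightarrow> \<beta> < d" using domE_iff_delta[OF sm(2)] d_def dl by simp
  have AX: "\<And>x. x \<in> X \<Longrightarrow> A x \<subseteq> X" unfolding A_def using P_sub by blast
  have claim: "\<beta> < d \<longrightarrow> e1 \<beta> = e2 \<beta>" for \<beta>
  proof (induction \<beta> rule: less_induct)
    case (less \<beta>)
    show ?case
    proof
      assume bd: "\<beta> < d"
      have IH: "\<And>\<gamma>. \<gamma> < \<beta> \<Longrightarrow> e1 \<gamma> = e2 \<gamma>" using less.IH bd by auto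
      have Sb: "e1 ` {\<gamma>. \<gamma> < \<beta>} = e2 ` {\<gamma>. \<gamma> < \<beta>}" using IH by auto
      define y1 where "y1 = e1 \<beta>"
      define y2 where "y2 = e2 \<beta>"
      have y1A: "y1 \<in> A x1" using enum_in dom1 bd unfolding y1_def e1_def by blast
      have y2A: "y2 \<in> A x2" using enum_in dom2 bd unfolding y2_def e2_def by blast
      have Py1: "PT X c n y1 = e1 ` {\<gamma>. \<gamma> < \<beta>}"
        using P_below[of y1 x1 X c n] y1A enum_below[OF sm(1)] bd d_def
        unfolding A_def y1_def e1_def by simp
      have Py2: "PT X c n y2 = e1 ` {\<gamma>. \<gamma> < \<beta>}"
        using P_below[of y2 x2 X c n] y2A enum_below[OF sm(2)] bd d_def dl Sb
        unfolding A_def y2_def e2_def by simp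
      have types: "c (insert y1 s) = c (insert y2 s)"
        if s: "s \<subseteq> e1 ` {\<gamma>. \<gamma> < \<beta>}" "finite s" "card s = n" for s
      proof -
        define S0 where "S0 = {\<gamma>. \<gamma> < \<beta> \<and> e1 \<gamma> \<in> s}"
        have injd: "inj_on e1 {\<gamma>. \<gamma> < d}"
          by (rule inj_onI) (use enum_inj dom1 in \<open>auto simp: e1_def\<close>)
        have S0d: "S0 \<subseteq> {\<gamma>. \<gamma> < d}" using bd unfolding S0_def by auto
        have imS0: "e1 ` S0 = s" using s(1) unfolding S0_def by blast
        have injS0: "inj_on e1 S0" using inj_on_subset[OF injd S0d] .
        have finS0: "finite S0" using finite_imageD[of e1 S0] imS0 s(2) injS0 by simp
        have cardS0: "card S0 = n" using card_image[OF injS0] imS0 s(3) by simp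
        have bS0: "\<beta> \<notin> S0" unfolding S0_def by simp
        have T: "insert \<beta> S0 \<subseteq> {\<gamma>. \<gamma> < delta (A x1)}" "finite (insert \<beta> S0)" "card (insert \<beta> S0) = Suc n"
          using S0d bd finS0 cardS0 bS0 d_def by auto
        have T2: "insert \<beta> S0 \<subseteq> {\<gamma>. \<gamma> < delta (A x2)}" using T(1) dl by simp
        have "c (insert y1 s) = c (e1 ` insert \<beta> S0)" using imS0 y1_def by simp
        also have "\<dots> = Gc c n (A x1) (insert \<beta> S0)" unfolding Gc_def e1_def using T by simp
        also have "\<dots> = Gc c n (A x2) (insert \<beta> S0)" using G by simp
        also have "\<dots> = c (e2 ` insert \<beta> S0)" unfolding Gc_def e2_def using T T2 by simp
        also have "e2 ` insert \<beta> S0 = insert y2 (e1 ` S0)"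
          using IH unfolding S0_def y2_def by auto
        finally show ?thesis using imS0 by simp
      qed
      have y1X: "y1 \<in> X" using AX[OF x(1)] y1A by blast
      have y2X: "y2 \<in> X" using AX[OF x(2)] y2A by blast
      have inj1: "\<And>\<gamma>. \<gamma> < \<beta> \<Longrightarrow> e1 \<gamma> \<noteq> y1"
        unfolding y1_def e1_def using enum_inj dom1 bd by (metis dual_order.strict_trans less_irrefl)
      have inj2: "\<And>\<gamma>. \<gamma> < \<beta> \<Longrightarrow> e1 \<gamma> \<noteq> y2"
        unfolding y2_def using IH enum_inj dom2 bd unfolding e2_def by (metis dual_order.strict_trans less_irrefl)
      have n12: "\<not> y1 < y2"
      proof
        assume lt: "y1 < y2"
        have "y1 \<in> PT X c n y2"
        proof (rule P_intro[OF y1X lt])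
          fix s assume "s \<subseteq> PT X c n y1" "finite s" "card s = n"
          thus "c (insert y1 s) = c (insert y2 s)" using types Py1 by simp
        qed
        thus False using Py2 inj1 by auto
      qed
      have n21: "\<not> y2 < y1"
      proof
        assume lt: "y2 < y1"
        have "y2 \<in> PT X c n y1"
        proof (rule P_intro[OF y2X lt])
          fix s assume "s \<subseteq> PT X c n y2" "finite s" "card s = n"
          thus "c (insert y2 s) = c (insert y1 s)" using types Py2 by simp
        qed
        thus False using Py1 inj2 by auto
      qed
      show "e1 \<beta> = e2 \<beta>" using n12 n21 unfolding y1_def y2_def by simp
    qed
  qed
  have "A x1 = e1 ` {\<beta>. \<beta> < d}" using enum_image_delta[OF sm(1)] d_def e1_def by simp
  also have "\<dots> = e2 ` {\<beta>. \<beta> < d}" using claim by auto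
  also have "\<dots> = A x2" using enum_image_delta[OF sm(2)] d_def dl e2_def by simp
  finally have AA: "A x1 = A x2" .
  have "x1 \<in> A x1" "x2 \<in> A x2" unfolding A_def by simp_all
  hence "x1 \<in> A x2" "x2 \<in> A x1" using AA by simp_all
  thus "x1 = x2" unfolding A_def using P_sub by (metis insert_iff less_asym)
qed

end

unbundle cardinal_syntax

context inac
begin

lemma enum_inj_on: "small (A::'o set) \<Longrightarrow> inj_on (enum A) {\<beta>. \<beta> < delta A}"
  by (rule inj_onI) (use enum_inj domE_iff_delta in blast)

lemma count:
  fixes Lam :: "'a set" and K :: "'c set" and n :: nat
  assumes Lam: "small Lam" and K: "small K"
  shows "\<exists>C::('o \<times> ('o set \<Rightarrow> 'c)) set. small C \<and>
    (\<forall>(X::'o set) c. (\<forall>s. s \<subseteq> X \<and> finite s \<and> card s = Suc n \<longrightarrow> c s \<in> K) \<longrightarrow>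
       (\<forall>x\<in>X. |PT X c n x| <o |Lam| ) \<longrightarrow> |X| \<le>o |C| )"
proof -
  have "small (Lam <+> (UNIV::bool set))" by (rule small_Plus[OF Lam small_finite]) simp
  then obtain L0 :: 'o where L0: "|Lam <+> (UNIV::bool set)| <o |{j. j < L0}|" using small_lt by blast
  define Gs :: "('o set \<Rightarrow> 'c) set" where "Gs = {g. \<forall>S. (S \<in> Pow {j. j < L0} \<longrightarrow> g S \<in> insert undefined K) \<and>
       (S \<notin> Pow {j. j < L0} \<longrightarrow> g S = undefined)}"
  define C where "C = {j. j < L0} \<times> Gs"
  have "small Gs" unfolding Gs_def
    by (rule small_funs) (simp_all add: small_Pow init_small small_insert K)
  hence smC: "small C" unfolding C_def using init_small small_Times by blast
  have main: "|X| \<le>o |C|"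
    if col: "\<forall>s. s \<subseteq> X \<and> finite s \<and> card s = Suc n \<longrightarrow> c s \<in> K"
      and sm: "\<forall>x\<in>X. |PT X c n x| <o |Lam|" for X :: "'o set" and c :: "'o set \<Rightarrow> 'c"
  proof -
    define A where "A = (\<lambda>x. insert x (PT X c n x))"
    have AX: "\<And>x. x \<in> X \<Longrightarrow> A x \<subseteq> X" unfolding A_def using P_sub by blast
    have leL: "|PT X c n x| \<le>o |Lam|" if "x \<in> X" for x using sm that ordLess_imp_ordLeq by blast
    have smA: "small (A x)" if "x \<in> X" for x
      unfolding A_def by (rule small_insert, rule small_leq[OF leL[OF that] Lam])
    have dL: "delta (A x) < L0" if x: "x \<in> X" for x
    proof (rule ccontr)
      assume "\<not> delta (A x) < L0"
      hence "{j. j < L0} \<subseteq> {j. j < delta (A x)}" by auto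
      hence 1: "|{j. j < L0}| \<le>o |{j. j < delta (A x)}|" by (rule card_of_mono1)
      have 2: "|{j. j < delta (A x)}| =o |A x|" by (rule card_delta[OF smA[OF x]])
      have "|A x| \<le>o |PT X c n x <+> {x}|" unfolding A_def
        using card_of_Un_Plus_ordLeq[of "PT X c n x" "{x}"] by simp
      moreover have "\<exists>f. inj_on f {x} \<and> f ` {x} \<subseteq> (UNIV::bool set)"
        by (rule exI[of _ "\<lambda>_. True"]) simp
      hence "|{x}| \<le>o |UNIV::bool set|" using card_of_ordLeq by blast
      hence "|PT X c n x <+> {x}| \<le>o |Lam <+> (UNIV::bool set)|" using card_of_Plus_mono leL[OF x] by blast
      ultimately have 3: "|A x| \<le>o |Lam <+> (UNIV::bool set)|" by (rule ordLeq_transitive)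
      have "|{j. j < L0}| \<le>o |A x|" using 1 2 ordLeq_ordIso_trans by blast
      hence "|{j. j < L0}| \<le>o |Lam <+> (UNIV::bool set)|" using 3 ordLeq_transitive by blast
      hence "|{j. j < L0}| <o |{j. j < L0}|" using L0 ordLeq_ordLess_trans by blast
      thus False using ordLess_irreflexive by blast
    qed
    define code where "code = (\<lambda>x. (delta (A x), Gc c n (A x)))"
    have "code ` X \<subseteq> C"
    proof
      fix z assume "z \<in> code ` X"
      then obtain x where x: "x \<in> X" "z = code x" by blast
      have "Gc c n (A x) \<in> Gs" unfolding Gs_def
      proof (intro CollectI allI conjI impI)
        fix S assume S: "S \<in> Pow {j. j < L0}"
        show "Gc c n (A x) S \<in> insert undefined K"
        proof (cases "S \<subseteq> {\<beta>. \<beta> < delta (A x)} \<and> finite S \<and> card S = Suc n")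
          case True
          have inj: "inj_on (enum (A x)) S" using inj_on_subset[OF enum_inj_on[OF smA[OF x(1)]]] True by blast
          have "enum (A x) ` S \<subseteq> A x" using True enum_image_delta[OF smA[OF x(1)]] by blast
          hence "enum (A x) ` S \<subseteq> X" using AX[OF x(1)] by blast
          moreover have "finite (enum (A x) ` S)" using True by simp
          moreover have "card (enum (A x) ` S) = Suc n" using True card_image[OF inj] by simp
          ultimately have "c (enum (A x) ` S) \<in> K" using col by blast
          thus ?thesis unfolding Gc_def using True by simp
        next
          case False thus ?thesis unfolding Gc_def by (simp only: if_False) simp
        qed
      next
        fix S assume S: "S \<notin> Pow {j. j < L0}"
        hence "\<not> S \<subseteq> {\<beta>. \<beta> < delta (A x)}" using dL[OF x(1)] by auto
        thus "Gc c n (A x) S = undefined" unfolding Gc_def by simp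
      qed
      thus "z \<in> C" unfolding C_def x(2) code_def using dL[OF x(1)] by simp
    qed
    moreover have "inj_on code X"
    proof (rule inj_onI)
      fix x1 x2 assume x: "x1 \<in> X" "x2 \<in> X" "code x1 = code x2"
      show "x1 = x2"
        by (rule code_inj[of x1 X x2 c n]) (use x smA in \<open>simp_all add: code_def A_def\<close>)
    qed
    ultimately show ?thesis using card_of_ordLeq[of X C] by blast
  qed
  show ?thesis by (rule exI[of _ C]) (use smC main in blast)
qed

theorem ER:
  fixes K :: "'c set" and m :: 'o
  assumes K: "small K"
  shows "\<exists>l::'o. \<forall>(X::'o set) c. |{j. j < l}| \<le>o |X| \<longrightarrow>
    (\<forall>s. s \<subseteq> X \<and> finite s \<and> card s = n \<longrightarrow> c s \<in> K) \<longrightarrow>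
    (\<exists>H\<subseteq>X. |{j. j < m}| \<le>o |H| \<and>
      (\<forall>s t. s \<subseteq> H \<longrightarrow> t \<subseteq> H \<longrightarrow> finite s \<longrightarrow> finite t \<longrightarrow> card s = n \<longrightarrow> card t = n \<longrightarrow> c s = c t))"
proof (induction n)
  case 0
  show ?case
  proof (rule exI[of _ m], intro allI impI)
    fix X :: "'o set" and c :: "'o set \<Rightarrow> 'c"
    assume "|{j. j < m}| \<le>o |X|"
    thus "\<exists>H\<subseteq>X. |{j. j < m}| \<le>o |H| \<and>
      (\<forall>s t. s \<subseteq> H \<longrightarrow> t \<subseteq> H \<longrightarrow> finite s \<longrightarrow> finite t \<longrightarrow> card s = 0 \<longrightarrow> card t = 0 \<longrightarrow> c s = c t)"
      by auto
  qed
next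
  case (Suc n)
  then obtain ln :: 'o where ln: "\<forall>(X::'o set) c. |{j. j < ln}| \<le>o |X| \<longrightarrow>
    (\<forall>s. s \<subseteq> X \<and> finite s \<and> card s = n \<longrightarrow> c s \<in> K) \<longrightarrow>
    (\<exists>H\<subseteq>X. |{j. j < m}| \<le>o |H| \<and>
      (\<forall>s t. s \<subseteq> H \<longrightarrow> t \<subseteq> H \<longrightarrow> finite s \<longrightarrow> finite t \<longrightarrow> card s = n \<longrightarrow> card t = n \<longrightarrow> c s = c t))"
    by blast
  obtain C :: "('o \<times> ('o set \<Rightarrow> 'c)) set" where C: "small C"
    "\<forall>(X::'o set) c. (\<forall>s. s \<subseteq> X \<and> finite s \<and> card s = Suc n \<longrightarrow> c s \<in> K) \<longrightarrow>
       (\<forall>x\<in>X. |PT X c n x| <o |{j. j < ln}| ) \<longrightarrow> |X| \<le>o |C|"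
    using count[OF init_small[of ln] K, where n=n] by blast
  obtain l :: 'o where l: "|C| <o |{j. j < l}|" using small_lt[OF C(1)] by blast
  show ?case
  proof (rule exI[of _ l], intro allI impI)
    fix X :: "'o set" and c :: "'o set \<Rightarrow> 'c"
    assume X: "|{j. j < l}| \<le>o |X|" and col: "\<forall>s. s \<subseteq> X \<and> finite s \<and> card s = Suc n \<longrightarrow> c s \<in> K"
    have "\<exists>x\<in>X. |{j. j < ln}| \<le>o |PT X c n x|"
    proof (rule ccontr)
      assume "\<not> ?thesis"
      hence "\<forall>x\<in>X. |PT X c n x| <o |{j. j < ln}|"
        using not_ordLeq_iff_ordLess[OF card_of_Well_order card_of_Well_order] by blast
      hence "|X| \<le>o |C|" using mp[OF mp[OF spec[OF spec[OF C(2), of X], of c] col]] by blast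
      hence "|{j. j < l}| \<le>o |C|" using X by (rule ordLeq_transitive[rotated])
      hence "|{j. j < l}| <o |{j. j < l}|" using l by (rule ordLeq_ordLess_trans)
      thus False using ordLess_irreflexive by blast
    qed
    then obtain x where x: "x \<in> X" "|{j. j < ln}| \<le>o |PT X c n x|" by blast
    define c' where "c' = (\<lambda>s. c (insert x s))"
    have col': "\<forall>s. s \<subseteq> PT X c n x \<and> finite s \<and> card s = n \<longrightarrow> c' s \<in> K"
    proof (intro allI impI)
      fix s assume s: "s \<subseteq> PT X c n x \<and> finite s \<and> card s = n"
      have "x \<notin> s" using s P_sub by blast
      moreover have "insert x s \<subseteq> X" using s P_sub x(1) by blast
      ultimately show "c' s \<in> K" unfolding c'_def using col s by simp
    qed
    have "\<exists>H\<subseteq>PT X c n x. |{j. j < m}| \<le>o |H| \<and>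
      (\<forall>s t. s \<subseteq> H \<longrightarrow> t \<subseteq> H \<longrightarrow> finite s \<longrightarrow> finite t \<longrightarrow> card s = n \<longrightarrow> card t = n \<longrightarrow> c' s = c' t)"
      using mp[OF mp[OF spec[OF spec[OF ln, of "PT X c n x"], of c'] x(2)] col'] .
    then obtain H where H: "H \<subseteq> PT X c n x" "|{j. j < m}| \<le>o |H|"
      "\<forall>s t. s \<subseteq> H \<longrightarrow> t \<subseteq> H \<longrightarrow> finite s \<longrightarrow> finite t \<longrightarrow> card s = n \<longrightarrow> card t = n \<longrightarrow> c' s = c' t"
      by blast
    have key: "c t = c' (t - {Max t})" if t: "t \<subseteq> H" "finite t" "card t = Suc n" for t
    proof -
      have ne: "t \<noteq> {}" using t by auto
      define y where "y = Max t"
      have yt: "y \<in> t" unfolding y_def using Max_in[OF t(2) ne] .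
      have tt: "t = insert y (t - {y})" using yt by blast
      have "c t = c (insert y (t - {y}))" using tt by simp
      also have "\<dots> = c (insert x (t - {y}))"
      proof (rule P_hom)
        show "y \<in> PT X c n x" using yt t(1) H(1) by blast
        show "t - {y} \<subseteq> PT X c n x" using t(1) H(1) by blast
        show "\<forall>w\<in>t - {y}. w < y"
        proof
          fix w assume w: "w \<in> t - {y}"
          hence "w \<le> y" unfolding y_def using Max_ge[OF t(2)] by blast
          thus "w < y" using w by (auto simp: order_less_le)
        qed
        show "finite (t - {y})" using t(2) by simp
        show "card (t - {y}) = n" using t(3) yt t(2) by simp
      qed
      finally show ?thesis unfolding c'_def y_def .
    qed
    show "\<exists>H\<subseteq>X. |{j. j < m}| \<le>o |H| \<and>
      (\<forall>s t. s \<subseteq> H \<longrightarrow> t \<subseteq> H \<longrightarrow> finite s \<longrightarrow> finite t \<longrightarrow> card s = Suc n \<longrightarrow> card t = Suc n \<longrightarrow> c s = c t)"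
    proof (intro exI conjI allI impI)
      show "H \<subseteq> X" using H(1) P_sub by blast
      show "|{j. j < m}| \<le>o |H|" by (rule H(2))
      fix s t assume st: "s \<subseteq> H" "t \<subseteq> H" "finite s" "finite t" "card s = Suc n" "card t = Suc n"
      have "c s = c' (s - {Max s})" using key st by blast
      also have "\<dots> = c' (t - {Max t})"
      proof -
        have ns: "s \<noteq> {}" "t \<noteq> {}" using st by auto
        have "card (s - {Max s}) = n" using card_Diff_singleton[OF Max_in[OF st(3) ns(1)]] st(5) by simp
        moreover have "card (t - {Max t}) = n" using card_Diff_singleton[OF Max_in[OF st(4) ns(2)]] st(6) by simp
        moreover have "s - {Max s} \<subseteq> H" "t - {Max t} \<subseteq> H" using st(1,2) by auto
        moreover have "finite (s - {Max s})" "finite (t - {Max t})" using st(3,4) by auto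
        ultimately show ?thesis using H(3) by blast
      qed
      also have "\<dots> = c t" using key[OF st(2,4,6)] by simp
      finally show "c s = c t" .
    qed
  qed
qed

end

unbundle cardinal_syntax

definition ERprop :: "nat \<Rightarrow> 'c set \<Rightarrow> 'o::wellorder \<Rightarrow> 'o \<Rightarrow> bool" where
  "ERprop n K m l \<longleftrightarrow> (\<forall>(X::'o set) (c::'o set \<Rightarrow> 'c). |{j. j < l}| \<le>o |X| \<longrightarrow>
    (\<forall>s. s \<subseteq> X \<and> finite s \<and> card s = n \<longrightarrow> c s \<in> K) \<longrightarrow>
    (\<exists>H\<subseteq>X. |{j. j < m}| \<le>o |H| \<and>
      (\<forall>s t. s \<subseteq> H \<longrightarrow> t \<subseteq> H \<longrightarrow> finite s \<longrightarrow> finite t \<longrightarrow> card s = n \<longrightarrow> card t = n \<longrightarrow> c s = c t)))"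

definition ERb :: "nat \<Rightarrow> 'c set \<Rightarrow> 'o::wellorder \<Rightarrow> 'o" where
  "ERb n K m = (SOME l. ERprop n K m l)"

definition UL :: "nat \<Rightarrow> 'o::wellorder \<Rightarrow> 'o set list set" where
  "UL N B = {ds. length ds \<le> N \<and> (\<forall>d\<in>set ds. d \<subseteq> {i. i < B})}"

definition Colors :: "nat \<Rightarrow> 'o::wellorder \<Rightarrow> 'c set \<Rightarrow> ('o set list \<Rightarrow> 'c) set" where
  "Colors N B K = {f. \<forall>x. (x \<in> UL N B \<longrightarrow> f x \<in> K) \<and> (x \<notin> UL N B \<longrightarrow> f x = undefined)}"

definition lateok :: "nat \<Rightarrow> (nat \<Rightarrow> nat) \<Rightarrow> (nat \<Rightarrow> 'o set) \<Rightarrow> 'o set list \<Rightarrow> bool" where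
  "lateok q nn H ds \<longleftrightarrow> length ds = q \<and> (\<forall>k<q. ds ! k \<subseteq> H k \<and> finite (ds ! k) \<and> card (ds ! k) = nn k)"

context inac
begin

lemma ERb_spec:
  fixes K :: "'c set" and m :: 'o
  assumes "small K" shows "ERprop n K m (ERb n K m)"
proof -
  have "\<exists>l. ERprop n K m l" unfolding ERprop_def by (rule ER[OF assms])
  thus ?thesis unfolding ERb_def by (rule someI_ex)
qed

lemma small_UL: "small (UL N (B::'o))"
proof -
  have "UL N B \<subseteq> {xs. set xs \<subseteq> Pow {i. i < B} \<and> length xs \<le> N}" unfolding UL_def by auto
  moreover have "small {xs. set xs \<subseteq> Pow {i. i < B} \<and> length xs \<le> N}"
    by (rule small_lists[OF small_Pow[OF init_small]])
  ultimately show ?thesis by (rule small_mono)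
qed

lemma small_Colors: "small K \<Longrightarrow> small (Colors N (B::'o) K)"
  unfolding Colors_def by (rule small_funs[OF small_UL])

lemma PH:
  fixes V :: "'o set list \<Rightarrow> 'c" and D0 :: "'o set list set" and nn :: "nat \<Rightarrow> nat"
    and mm lsz Bnd :: "nat \<Rightarrow> 'o" and b0 :: 'o and K :: "'c set" and N :: nat
  assumes smK: "small K" and VK: "\<forall>ds. V ds \<in> K"
    and lsz: "\<forall>k<q. lsz k = ERb (nn k) (Colors N (Bnd k) K) (mm k)"
    and Bnd: "\<forall>k<q. b0 \<le> Bnd k \<and> (\<forall>j<k. lsz j \<le> Bnd k)"
    and D0: "\<forall>d0\<in>D0. length d0 + q \<le> N \<and> (\<forall>d\<in>set d0. d \<subseteq> {i. i < b0})"
  shows "\<exists>H. (\<forall>k<q. H k \<subseteq> {i. i < lsz k} \<and> |{j. j < mm k}| \<le>o |H k| ) \<and>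
    (\<forall>d0\<in>D0. \<forall>ds ds'. lateok q nn H ds \<longrightarrow> lateok q nn H ds' \<longrightarrow> V (d0 @ ds) = V (d0 @ ds'))"
  using VK D0 lsz Bnd
proof (induction q arbitrary: V)
  case 0
  show ?case by (rule exI[of _ "\<lambda>_. {}"]) (simp add: lateok_def)
next
  case (Suc q)
  define Kq where "Kq = Colors N (Bnd q) K"
  define chi where "chi = (\<lambda>A pre. if pre \<in> UL N (Bnd q) then V (pre @ [A]) else undefined)"
  have chiK: "\<forall>s. s \<subseteq> {i. i < lsz q} \<and> finite s \<and> card s = nn q \<longrightarrow> chi s \<in> Kq"
    unfolding chi_def Kq_def Colors_def using Suc.prems(1) by auto
  have "ERprop (nn q) Kq (mm q) (lsz q)" using Suc.prems(3) ERb_spec[OF small_Colors[OF smK]] Kq_def by simp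
  hence EP2: "\<forall>(X::'o set) (c::'o set \<Rightarrow> 'o set list \<Rightarrow> 'c). |{j. j < lsz q}| \<le>o |X| \<longrightarrow>
    (\<forall>s. s \<subseteq> X \<and> finite s \<and> card s = nn q \<longrightarrow> c s \<in> Kq) \<longrightarrow>
    (\<exists>H\<subseteq>X. |{j. j < mm q}| \<le>o |H| \<and>
      (\<forall>s t. s \<subseteq> H \<longrightarrow> t \<subseteq> H \<longrightarrow> finite s \<longrightarrow> finite t \<longrightarrow> card s = nn q \<longrightarrow> card t = nn q \<longrightarrow> c s = c t))"
    unfolding ERprop_def .
  have "\<exists>H\<subseteq>{i. i < lsz q}. |{j. j < mm q}| \<le>o |H| \<and>
      (\<forall>s t. s \<subseteq> H \<longrightarrow> t \<subseteq> H \<longrightarrow> finite s \<longrightarrow> finite t \<longrightarrow> card s = nn q \<longrightarrow> card t = nn q \<longrightarrow> chi s = chi t)"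
    using mp[OF mp[OF EP2[THEN spec[where x="{i. i < lsz q}"], THEN spec[where x=chi]]
       ordLeq_reflexive[OF card_of_Well_order]] chiK] .
  then obtain Hq where Hq: "Hq \<subseteq> {i. i < lsz q}" "|{j. j < mm q}| \<le>o |Hq|"
    "\<And>s t. s \<subseteq> Hq \<Longrightarrow> t \<subseteq> Hq \<Longrightarrow> finite s \<Longrightarrow> finite t \<Longrightarrow> card s = nn q \<Longrightarrow> card t = nn q \<Longrightarrow> chi s = chi t"
    by blast
  define A0 where "A0 = (SOME A. A \<subseteq> Hq \<and> finite A \<and> card A = nn q)"
  define V' where "V' = (\<lambda>pre. V (pre @ [A0]))"
  have "\<forall>ds. V' ds \<in> K" unfolding V'_def using Suc.prems(1) by simp
  moreover have "\<forall>d0\<in>D0. length d0 + q \<le> N \<and> (\<forall>d\<in>set d0. d \<subseteq> {i. i < b0})" using Suc.prems(2) by auto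
  moreover have "\<forall>k<q. lsz k = ERb (nn k) (Colors N (Bnd k) K) (mm k)" using Suc.prems(3) by simp
  moreover have "\<forall>k<q. b0 \<le> Bnd k \<and> (\<forall>j<k. lsz j \<le> Bnd k)" using Suc.prems(4) by simp
  ultimately have "\<exists>H. (\<forall>k<q. H k \<subseteq> {i. i < lsz k} \<and> |{j. j < mm k}| \<le>o |H k| ) \<and>
    (\<forall>d0\<in>D0. \<forall>ds ds'. lateok q nn H ds \<longrightarrow> lateok q nn H ds' \<longrightarrow> V' (d0 @ ds) = V' (d0 @ ds'))"
    by (rule Suc.IH)
  then obtain H0 where H0: "\<forall>k<q. H0 k \<subseteq> {i. i < lsz k} \<and> |{j. j < mm k}| \<le>o |H0 k|"
    "\<forall>d0\<in>D0. \<forall>ds ds'. lateok q nn H0 ds \<longrightarrow> lateok q nn H0 ds' \<longrightarrow> V' (d0 @ ds) = V' (d0 @ ds')"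
    by blast
  define H where "H = H0(q := Hq)"
  have part1: "\<forall>k<Suc q. H k \<subseteq> {i. i < lsz k} \<and> |{j. j < mm k}| \<le>o |H k|"
    unfolding H_def using H0(1) Hq(1,2) by (auto simp: less_Suc_eq)
  have red: "V (d0 @ ds) = V' (d0 @ take q ds)" and lt: "lateok q nn H0 (take q ds)"
    if d0: "d0 \<in> D0" and ds: "lateok (Suc q) nn H ds" for d0 ds
  proof -
    have len: "length ds = Suc q" using ds unfolding lateok_def by simp
    have dsq: "ds = take q ds @ [ds ! q]" using len by (metis lessI take_Suc_conv_app_nth take_all order_refl)
    have "ds ! q \<subseteq> H q \<and> finite (ds ! q) \<and> card (ds ! q) = nn q"
      using ds unfolding lateok_def by blast
    hence Aq: "ds ! q \<subseteq> Hq" "finite (ds ! q)" "card (ds ! q) = nn q"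
      unfolding H_def by auto
    show lt: "lateok q nn H0 (take q ds)"
      unfolding lateok_def
    proof (intro conjI allI impI)
      show "length (take q ds) = q" using len by simp
      fix k assume k: "k < q"
      have "ds ! k \<subseteq> H k \<and> finite (ds ! k) \<and> card (ds ! k) = nn k"
        using ds k unfolding lateok_def by simp
      moreover have "H k = H0 k" unfolding H_def using k by simp
      moreover have "take q ds ! k = ds ! k" using k by simp
      ultimately show "take q ds ! k \<subseteq> H0 k" "finite (take q ds ! k)" "card (take q ds ! k) = nn k" by simp_all
    qed
    have A0: "A0 \<subseteq> Hq \<and> finite A0 \<and> card A0 = nn q" unfolding A0_def
      by (rule someI[of _ "ds ! q"]) (use Aq in simp)
    have inU: "d0 @ take q ds \<in> UL N (Bnd q)"
    proof -
      have "length (d0 @ take q ds) \<le> N" using Suc.prems(2) d0 len by auto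
      moreover have "\<forall>d\<in>set d0. d \<subseteq> {i. i < Bnd q}"
      proof
        fix d assume d: "d \<in> set d0"
        have "d \<subseteq> {i. i < b0}" using Suc.prems(2) d0 d by blast
        moreover have "b0 \<le> Bnd q" using Suc.prems(4) by simp
        ultimately show "d \<subseteq> {i. i < Bnd q}" by (auto intro: order_less_le_trans)
      qed
      moreover have "\<forall>d\<in>set (take q ds). d \<subseteq> {i. i < Bnd q}"
      proof
        fix d assume "d \<in> set (take q ds)"
        then obtain k where k: "k < q" "d = take q ds ! k" by (metis in_set_conv_nth length_take len min.absorb2 le_SucI order_refl)
        have "d \<subseteq> H0 k" using lt k unfolding lateok_def by simp
        moreover have "H0 k \<subseteq> {i. i < lsz k}" using H0(1) k(1) by simp
        moreover have "lsz k \<le> Bnd q" using Suc.prems(4) k(1) by simp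
        ultimately show "d \<subseteq> {i. i < Bnd q}" by (auto intro: order_less_le_trans)
      qed
      ultimately show ?thesis unfolding UL_def by auto
    qed
    have "V (d0 @ ds) = V ((d0 @ take q ds) @ [ds ! q])" using dsq by (metis append_assoc)
    also have "\<dots> = chi (ds ! q) (d0 @ take q ds)" unfolding chi_def using inU by simp
    also have "\<dots> = chi A0 (d0 @ take q ds)" using Hq(3)[of "ds ! q" A0] Aq A0 by simp
    also have "\<dots> = V' (d0 @ take q ds)" unfolding chi_def V'_def using inU by simp
    finally show "V (d0 @ ds) = V' (d0 @ take q ds)" .
  qed
  have part2: "\<forall>d0\<in>D0. \<forall>ds ds'. lateok (Suc q) nn H ds \<longrightarrow> lateok (Suc q) nn H ds' \<longrightarrow> V (d0 @ ds) = V (d0 @ ds')"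
  proof (intro ballI allI impI)
    fix d0 ds ds' assume a: "d0 \<in> D0" "lateok (Suc q) nn H ds" "lateok (Suc q) nn H ds'"
    have "V (d0 @ ds) = V' (d0 @ take q ds)" using red[OF a(1,2)] .
    also have "\<dots> = V' (d0 @ take q ds')" using H0(2) a(1) lt[OF a(1,2)] lt[OF a(1,3)] by blast
    also have "\<dots> = V (d0 @ ds')" using red[OF a(1,3)] by simp
    finally show "V (d0 @ ds) = V (d0 @ ds')" .
  qed
  show ?case using part1 part2 by blast
qed

end

lemma teval_cong: "(\<forall>i\<in>trm_vars t. w i = w' i) \<Longrightarrow> teval fI w t = teval fI w' t"
proof (induction t)
  case (Var n) then show ?case by simp
next
  case (Fn f ts)
  have "map (teval fI w) ts = map (teval fI w') ts"
    using Fn by (auto intro!: map_cong)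
  then show ?case by (metis teval.simps(2))
qed

definition lsort :: "('m \<Rightarrow> 'm \<Rightarrow> bool) \<Rightarrow> 'm set \<Rightarrow> 'm list" where
  "lsort lt A = (SOME l. set l = A \<and> sorted_wrt lt l)"

lemma sorted_unique:
  assumes lin: "strict_linorder lt"
  shows "sorted_wrt lt l1 \<Longrightarrow> sorted_wrt lt l2 \<Longrightarrow> set l1 = set l2 \<Longrightarrow> l1 = l2"
proof (induction l1 arbitrary: l2)
  case Nil then show ?case by simp
next
  case (Cons a l1)
  then obtain b l2' where l2: "l2 = b # l2'" by (cases l2) auto
  have irr: "\<And>x. \<not> lt x x" and tr: "\<And>x y z. lt x y \<Longrightarrow> lt y z \<Longrightarrow> lt x z"
    using lin unfolding strict_linorder_def by blast+
  have ab: "a = b"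
  proof (rule ccontr)
    assume "a \<noteq> b"
    hence "b \<in> set l1" "a \<in> set l2'" using Cons.prems(3) l2 by (auto simp: insert_eq_iff)
    hence "lt a b" "lt b a" using Cons.prems(1,2) l2 by auto
    thus False using tr irr by blast
  qed
  have "a \<notin> set l1" using Cons.prems(1) irr by auto
  moreover have "b \<notin> set l2'" using Cons.prems(2) l2 irr by auto
  ultimately have "set l1 = set l2'" using Cons.prems(3) l2 ab by auto
  hence "l1 = l2'" using Cons.IH Cons.prems(1,2) l2 by simp
  thus ?case using ab l2 by simp
qed

lemma lsort_set: "strict_linorder lt \<Longrightarrow> sorted_wrt lt l \<Longrightarrow> lsort lt (set l) = l"
proof -
  assume a: "strict_linorder lt" "sorted_wrt lt l"
  have "set (lsort lt (set l)) = set l \<and> sorted_wrt lt (lsort lt (set l))"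
    unfolding lsort_def by (rule someI[of _ l]) (use a in simp)
  thus ?thesis using sorted_unique[OF a(1)] a(2) by blast
qed

lemma sorted_wrt_irr_distinct: "(\<And>x. \<not> R x x) \<Longrightarrow> sorted_wrt R xs \<Longrightarrow> distinct xs"
  by (induction xs) auto

definition subl :: "nat \<Rightarrow> 'm list list \<Rightarrow> (nat \<times> nat) list \<Rightarrow> 'm list" where
  "subl k x P = map (\<lambda>c. x ! (k - 1) ! (snd c - 1)) (filter (\<lambda>c. fst c = k) P)"

definition rnk :: "(nat \<times> nat) list \<Rightarrow> nat \<Rightarrow> nat" where
  "rnk P i = length (filter (\<lambda>c. fst c = fst (P ! i)) (take i P))"

lemma filter_nth_len:
  "i < length xs \<Longrightarrow> p (xs ! i) \<Longrightarrow>
    length (filter p (take i xs)) < length (filter p xs) \<and> filter p xs ! length (filter p (take i xs)) = xs ! i"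
proof (induction xs arbitrary: i)
  case Nil then show ?case by simp
next
  case (Cons a xs)
  show ?case
  proof (cases i)
    case 0 then show ?thesis using Cons.prems by simp
  next
    case (Suc j)
    then show ?thesis using Cons.IH[of j] Cons.prems by auto
  qed
qed

lemma subl_nth: "i < length P \<Longrightarrow> subl (fst (P ! i)) x P ! rnk P i = cval x (P ! i)"
  unfolding subl_def rnk_def cval_def
  using filter_nth_len[of i P "\<lambda>c. fst c = fst (P ! i)"] by simp

lemma rnk_fst: "map fst P = map fst Q \<Longrightarrow> i < length P \<Longrightarrow> rnk P i = rnk Q i"
proof -
  assume a: "map fst P = map fst Q" "i < length P"
  have l: "length P = length Q" using a(1) by (metis length_map)
  have f: "fst (P ! i) = fst (Q ! i)" using a l by (metis nth_map)
  have "\<And>R. length (filter (\<lambda>c. fst c = fst (P ! i)) (take i R)) = length (filter (\<lambda>b. b = fst (P ! i)) (take i (map fst R)))"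
    by (simp add: take_map filter_map comp_def)
  thus ?thesis unfolding rnk_def using a(1) f by metis
qed

definition PhiT :: "('f \<Rightarrow> 'm list \<Rightarrow> 'm) \<Rightarrow> 'f trm \<Rightarrow> (nat \<times> nat) list \<Rightarrow> (nat \<Rightarrow> 'm list) \<Rightarrow> 'm" where
  "PhiT fI tau P Sub = teval fI (\<lambda>i. Sub (fst (P ! i)) ! rnk P i) tau"

lemma lhs_Phi: "trm_vars tau \<subseteq> {..<length P} \<Longrightarrow>
   teval fI (\<lambda>i. cval x (P ! i)) tau = PhiT fI tau P (\<lambda>k. subl k x P)"
  unfolding PhiT_def
proof (rule teval_cong, intro ballI)
  fix i assume "trm_vars tau \<subseteq> {..<length P}" "i \<in> trm_vars tau"
  hence "i < length P" by auto
  thus "cval x (P ! i) = subl (fst (P ! i)) x P ! rnk P i" using subl_nth[of i P x] by simp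
qed

lemma Phi_cong_P: "trm_vars tau \<subseteq> {..<length P} \<Longrightarrow> map fst P = map fst Q \<Longrightarrow>
   PhiT fI tau P Sub = PhiT fI tau Q Sub"
  unfolding PhiT_def
proof (rule teval_cong, intro ballI)
  fix i assume "trm_vars tau \<subseteq> {..<length P}" "map fst P = map fst Q" "i \<in> trm_vars tau"
  moreover hence "i < length P" "length P = length Q" by (auto dest: map_eq_imp_length_eq)
  ultimately show "Sub (fst (P ! i)) ! rnk P i = Sub (fst (Q ! i)) ! rnk Q i"
    using rnk_fst by (metis nth_map)
qed

lemma Phi_cong_Sub: "trm_vars tau \<subseteq> {..<length P} \<Longrightarrow> (\<forall>k\<in>fst ` set P. Sub k = Sub' k) \<Longrightarrow>
   PhiT fI tau P Sub = PhiT fI tau P Sub'"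
  unfolding PhiT_def by (rule teval_cong) auto

lemma subl_sorted:
  assumes "sorted_wrt lexless P" "\<forall>c\<in>set P. fst c = k \<longrightarrow> 1 \<le> snd c \<and> snd c \<le> length (x ! (k - 1))"
    "sorted_wrt lt (x ! (k - 1))"
  shows "sorted_wrt lt (subl k x P)"
  unfolding subl_def sorted_wrt_map
proof (rule sorted_wrt_mono_rel[OF _ sorted_wrt_filter[OF assms(1)]])
  fix c d assume cd: "c \<in> set (filter (\<lambda>c. fst c = k) P)" "d \<in> set (filter (\<lambda>c. fst c = k) P)" "lexless c d"
  hence "snd c < snd d" "1 \<le> snd c" "snd d \<le> length (x ! (k - 1))"
    using assms(2) unfolding lexless_def by auto
  thus "lt (x ! (k - 1) ! (snd c - 1)) (x ! (k - 1) ! (snd d - 1))"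
    using sorted_wrt_nth_less[OF assms(3)] by simp
qed

lemma set_subl: "\<forall>c\<in>set P. fst c = k \<longrightarrow> 1 \<le> snd c \<and> snd c \<le> length (x ! (k - 1)) \<Longrightarrow>
  set (subl k x P) \<subseteq> set (x ! (k - 1))"
  unfolding subl_def by auto

lemma length_subl: "length (subl k x P) = length (filter (\<lambda>c. fst c = k) P)"
  unfolding subl_def by simp

lemma length_filter_fst: "map fst P = map fst Q \<Longrightarrow>
   length (filter (\<lambda>c. fst c = k) P) = length (filter (\<lambda>c. fst c = k) Q)"
proof -
  assume "map fst P = map fst Q"
  hence "length (filter (\<lambda>b. b = k) (map fst P)) = length (filter (\<lambda>b. b = k) (map fst Q))" by simp
  thus ?thesis by (simp add: filter_map comp_def)
qed

definition szs :: "('o list \<Rightarrow> 'o \<Rightarrow> 'o) \<Rightarrow> 'o list \<Rightarrow> 'o list" where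
  "szs ns hist = foldl (\<lambda>acc m. acc @ [ns acc m]) [] hist"

lemma szs_snoc: "szs ns (xs @ [m]) = szs ns xs @ [ns (szs ns xs) m]"
  unfolding szs_def by simp

lemma szs_length: "length (szs ns xs) = length xs"
  by (induction xs rule: rev_induct) (auto simp: szs_snoc, simp add: szs_def)

lemma szs_take: "take k (szs ns xs) = szs ns (take k xs)"
proof (induction xs rule: rev_induct)
  case Nil then show ?case by (simp add: szs_def)
next
  case (snoc m xs)
  show ?case
  proof (cases "k \<le> length xs")
    case True
    then show ?thesis using snoc szs_length[of ns xs] by (simp add: szs_snoc)
  next
    case False
    then show ?thesis using szs_length[of ns "xs @ [m]"] by simp
  qed
qed

lemma szs_nth: "k < length xs \<Longrightarrow> szs ns xs ! k = ns (szs ns (take k xs)) (xs ! k)"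
proof -
  assume k: "k < length xs"
  have "szs ns xs ! k = take (Suc k) (szs ns xs) ! k" by simp
  also have "\<dots> = szs ns (take (Suc k) xs) ! k" by (simp only: szs_take)
  also have "take (Suc k) xs = take k xs @ [xs ! k]" using k by (simp add: take_Suc_conv_app_nth)
  also have "szs ns (take k xs @ [xs ! k]) ! k = ns (szs ns (take k xs)) (xs ! k)"
    using szs_length[of ns "take k xs"] k by (simp add: szs_snoc nth_append)
  finally show ?thesis .
qed


unbundle cardinal_syntax

definition WB :: "('m \<Rightarrow> 'm \<Rightarrow> bool) \<Rightarrow> ('m \<Rightarrow> 'o::wellorder) \<Rightarrow> nat \<Rightarrow> nat \<Rightarrow> nat
    \<Rightarrow> 'm list list set \<Rightarrow> 'o list \<Rightarrow> (nat \<Rightarrow> 'o) \<Rightarrow> ('o \<Rightarrow> 'o) \<Rightarrow> (nat \<Rightarrow> 'm set) \<Rightarrow> ('o \<Rightarrow> 'm set) \<Rightarrow> bool" where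
  "WB lt F r s e S mus bet tail X Y \<longleftrightarrow>
        (\<forall>k\<in>{1..e}. X k \<subseteq> {a. F a = bet k} \<and>
             (card_of (X k), card_of {j. j < mus ! (k - 1)}) \<in> ordIso) \<and>
        (\<forall>i. i \<noteq> ozero \<longrightarrow> Y i \<subseteq> {a. F a = tail i}) \<and>
        (\<forall>m::'o. \<exists>i. i \<noteq> ozero \<and> (card_of {j. j < m}, card_of (Y i)) \<in> ordLeq) \<and>
        (\<forall>x. length x = s \<and> (\<forall>k\<in>{1..e}. x ! (k - 1) \<in> incr_seqs lt r (X k)) \<and>
             drop e x \<in> Fblocks lt F r (s - e) (\<Union>i\<in>{i. i \<noteq> ozero}. Y i)
             \<longrightarrow> x \<in> S)"

lemma II_wins_iff: "II_wins lt F r s e S mus bet tail \<longleftrightarrow>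
     (\<forall>k. 1 \<le> k \<and> k < e \<longrightarrow> bet k < bet (Suc k)) \<and>
     bet e = tail ozero \<and> strict_mono tail \<and> (\<exists>X Y. WB lt F r s e S mus bet tail X Y)"
  unfolding II_wins_def WB_def by (rule refl)

lemma ozero_least: "ozero \<le> (i::'o::wellorder)"
  unfolding ozero_def by (rule Least_le) simp

locale mainloc = inac T for T :: "'o::wellorder itself" +
  fixes lt :: "'m \<Rightarrow> 'm \<Rightarrow> bool" and Mc :: "'o \<Rightarrow> 'm set" and F :: "'m \<Rightarrow> 'o"
    and r s e :: nat and S :: "'m list list set"
    and fI :: "'f \<Rightarrow> 'm list \<Rightarrow> 'm" and ar :: "'f \<Rightarrow> nat" and tau :: "'f trm"
    and cs :: "(nat \<times> nat) list" and u v :: nat and ls :: "nat list"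
  assumes lin: "strict_linorder lt"
    and Fdef: "F = Fidx Mc"
    and Mc_small: "\<And>i. small (Mc i)"
    and Mc_mono: "\<And>i j. i \<le> j \<Longrightarrow> Mc i \<subseteq> Mc j"
    and Mc_init: "\<And>i. init_seg lt (Mc i) UNIV"
    and Mc_union: "(\<Union>i. Mc i) = UNIV"
    and rs: "1 \<le> r" "1 \<le> s"
    and e: "1 \<le> e" "e \<le> s"
    and Ssub: "S \<subseteq> Fblocks lt F r s UNIV"
    and Ssl: "superlarge lt F r s e S"
    and sig: "sigma_iv ar tau cs u v ls"
    and bnd: "consts_bounded r s cs u v ls"
    and iot: "e \<le> iota cs"
begin

lemma F_mem: "a \<in> Mc (F a)"
proof -
  have "\<exists>i. a \<in> Mc i" using Mc_union by blast
  thus ?thesis unfolding Fdef Fidx_def by (rule LeastI_ex)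
qed

lemma level_mem: "F a = b \<Longrightarrow> a \<in> Mc b"
  using F_mem by blast

lemma level_sub: "A \<subseteq> {a. F a = b} \<Longrightarrow> A \<subseteq> Mc b"
  using level_mem by blast

lemma F_le: "a \<in> Mc i \<Longrightarrow> F a \<le> i"
  unfolding Fdef Fidx_def by (rule Least_le)

lemma below_mem: "lt b a \<Longrightarrow> a \<in> Mc i \<Longrightarrow> b \<in> Mc i"
  using Mc_init[of i] unfolding init_seg_def by blast

abbreviation E where "E \<equiv> iota cs"

definition stS :: "'o list \<Rightarrow> 'o \<Rightarrow> 'o" where
  "stS = (SOME st. \<forall>mus. length mus = e \<longrightarrow> II_wins lt F r s e S mus (\<lambda>k. st (take k mus) ozero) (st mus))"

lemma stS_win: "length mus = e \<Longrightarrow> II_wins lt F r s e S mus (\<lambda>k. stS (take k mus) ozero) (stS mus)"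
proof -
  have "\<exists>st. \<forall>mus. length mus = e \<longrightarrow> II_wins lt F r s e S mus (\<lambda>k. st (take k mus) ozero) (st mus)"
    using Ssl unfolding superlarge_def by blast
  hence "\<forall>mus. length mus = e \<longrightarrow> II_wins lt F r s e S mus (\<lambda>k. stS (take k mus) ozero) (stS mus)"
    unfolding stS_def by (rule someI_ex)
  moreover assume "length mus = e"
  ultimately show ?thesis by blast
qed

definition XYS :: "'o list \<Rightarrow> (nat \<Rightarrow> 'm set) \<times> ('o \<Rightarrow> 'm set)" where
  "XYS z = (SOME p. WB lt F r s e S z (\<lambda>k. stS (take k z) ozero) (stS z) (fst p) (snd p))"

definition XS where "XS z = fst (XYS z)"
definition YS where "YS z = snd (XYS z)"

lemma win_parts:
  assumes "length z = e"
  shows "\<forall>k. 1 \<le> k \<and> k < e \<longrightarrow> stS (take k z) ozero < stS (take (Suc k) z) ozero"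
    "stS (take e z) ozero = stS z ozero" "strict_mono (stS z)"
    "WB lt F r s e S z (\<lambda>k. stS (take k z) ozero) (stS z) (XS z) (YS z)"
proof -
  have w: "II_wins lt F r s e S z (\<lambda>k. stS (take k z) ozero) (stS z)" using stS_win[OF assms] .
  thus "\<forall>k. 1 \<le> k \<and> k < e \<longrightarrow> stS (take k z) ozero < stS (take (Suc k) z) ozero"
    "stS (take e z) ozero = stS z ozero" "strict_mono (stS z)"
    unfolding II_wins_iff by auto
  have "\<exists>X Y. WB lt F r s e S z (\<lambda>k. stS (take k z) ozero) (stS z) X Y" using w unfolding II_wins_iff by blast
  hence "\<exists>p. WB lt F r s e S z (\<lambda>k. stS (take k z) ozero) (stS z) (fst p) (snd p)" by auto
  hence "WB lt F r s e S z (\<lambda>k. stS (take k z) ozero) (stS z) (fst (XYS z)) (snd (XYS z))"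
    unfolding XYS_def by (rule someI_ex)
  thus "WB lt F r s e S z (\<lambda>k. stS (take k z) ozero) (stS z) (XS z) (YS z)"
    unfolding XS_def YS_def .
qed

lemma YS_level: "length z = e \<Longrightarrow> i \<noteq> ozero \<Longrightarrow> YS z i \<subseteq> {a. F a = stS z i}"
  using win_parts(4) unfolding WB_def by blast

lemma YS_sup: "length z = e \<Longrightarrow> \<exists>i. i \<noteq> ozero \<and> |{j. j < (m::'o)}| \<le>o |YS z i|"
  using win_parts(4) unfolding WB_def by blast

lemma XS_level: "length z = e \<Longrightarrow> k \<in> {1..e} \<Longrightarrow> XS z k \<subseteq> {a. F a = stS (take k z) ozero}"
  using win_parts(4) unfolding WB_def by blast

lemma XS_card: "length z = e \<Longrightarrow> k \<in> {1..e} \<Longrightarrow> |XS z k| =o |{j. j < z ! (k - 1)}|"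
  using win_parts(4) unfolding WB_def by blast

lemma XYS_prod: "length z = e \<Longrightarrow> length x = s \<Longrightarrow> (\<forall>k\<in>{1..e}. x ! (k - 1) \<in> incr_seqs lt r (XS z k)) \<Longrightarrow>
   drop e x \<in> Fblocks lt F r (s - e) (\<Union>i\<in>{i. i \<noteq> ozero}. YS z i) \<Longrightarrow> x \<in> S"
  using win_parts(4) unfolding WB_def by blast

lemma YS_unb:
  fixes m :: 'o
  assumes z: "length z = e"
  shows "\<exists>i. i \<noteq> ozero \<and> i0 < i \<and> |{j. j < m}| \<le>o |YS z i|"
proof -
  have smM: "small (Mc (stS z i0))" by (rule Mc_small)
  obtain m' :: 'o where m': "|Mc (stS z i0)| <o |{j. j < m'}|" using small_lt[OF smM] by blast
  define m2 where "m2 = max m m'"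
  obtain i where i: "i \<noteq> ozero" "|{j. j < m2}| \<le>o |YS z i|" using YS_sup[OF z] by blast
  have mm: "|{j. j < m}| \<le>o |{j. j < m2}|" "|{j. j < m'}| \<le>o |{j. j < m2}|"
    unfolding m2_def by (auto intro!: card_of_mono1 simp: less_max_iff_disj)
  have "i0 < i"
  proof (rule ccontr)
    assume "\<not> i0 < i"
    hence ii: "i \<le> i0" by simp
    have "YS z i \<subseteq> Mc (stS z i)" using YS_level[OF z i(1)] by (rule level_sub)
    also have "\<dots> \<subseteq> Mc (stS z i0)" using Mc_mono win_parts(3)[OF z] ii by (metis strict_mono_less_eq)
    finally have "|YS z i| \<le>o |Mc (stS z i0)|" by (rule card_of_mono1)
    hence "|{j. j < m'}| \<le>o |Mc (stS z i0)|" using mm(2) i(2) ordLeq_transitive by metis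
    hence "|{j. j < m'}| <o |{j. j < m'}|" using m' ordLeq_ordLess_trans by blast
    thus False using ordLess_irreflexive by blast
  qed
  thus ?thesis using i mm(1) ordLeq_transitive by blast
qed

end

unbundle cardinal_syntax

context mainloc
begin

primrec idxf :: "'o list \<Rightarrow> nat \<Rightarrow> 'o" where
  "idxf z 0 = ozero"
| "idxf z (Suc j) = (SOME i. i \<noteq> ozero \<and> idxf z j < i \<and> |{x. x < z ! (e + j)}| \<le>o |YS (take e z) i| )"

lemma idxf_prefix: "e + j \<le> k \<Longrightarrow> idxf (take k z) j = idxf z j"
proof (induction j)
  case 0 then show ?case by simp
next
  case (Suc j)
  have "(take k z) ! (e + j) = z ! (e + j)" using Suc.prems by simp
  moreover have "take e (take k z) = take e z" using Suc.prems by (simp add: min_def)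
  moreover have "idxf (take k z) j = idxf z j" using Suc by simp
  ultimately show ?case by simp
qed

lemma idxf_spec:
  assumes "e \<le> length z"
  shows "idxf z (Suc j) \<noteq> ozero \<and> idxf z j < idxf z (Suc j) \<and> |{x. x < z ! (e + j)}| \<le>o |YS (take e z) (idxf z (Suc j))|"
proof -
  have "length (take e z) = e" using assms by simp
  hence "\<exists>i. i \<noteq> ozero \<and> idxf z j < i \<and> |{x. x < z ! (e + j)}| \<le>o |YS (take e z) i|" by (rule YS_unb)
  thus ?thesis unfolding idxf.simps by (rule someI_ex)
qed

lemma idxf_mono: "e \<le> length z \<Longrightarrow> j < j' \<Longrightarrow> idxf z j < idxf z j'"
proof (induction j')
  case 0 then show ?case by simp
next
  case (Suc j')
  show ?case
  proof (cases "j = j'")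
    case True then show ?thesis using idxf_spec[OF Suc.prems(1)] by simp
  next
    case False
    hence "idxf z j < idxf z j'" using Suc by simp
    moreover have "idxf z j' < idxf z (Suc j')" using idxf_spec[OF Suc.prems(1), of j'] by blast
    ultimately show ?thesis by (rule less_trans)
  qed
qed

definition BET :: "'o list \<Rightarrow> 'o" where
  "BET z = (if length z < e then stS z ozero else stS (take e z) (idxf z (length z - e)))"

definition Kc :: "'o list \<Rightarrow> 'm option set" where
  "Kc z = insert None (Some ` Mc (BET (take u z)))"

definition Bndf :: "'o list \<Rightarrow> 'o" where
  "Bndf z = Max (insert ozero (set z))"

definition nnk :: "nat \<Rightarrow> nat" where
  "nnk k = length (filter (\<lambda>c. fst c = k) cs)"

definition newsz :: "'o list \<Rightarrow> 'o \<Rightarrow> 'o" where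
  "newsz z m = (if Suc (length z) \<le> u then m
     else ERb (nnk (Suc (length z))) (Colors E (Bndf z) (Kc z)) m)"

definition SZ :: "'o list \<Rightarrow> 'o list" where
  "SZ = szs newsz"

definition gmap :: "'o list \<Rightarrow> 'o \<Rightarrow> 'o" where
  "gmap z = enum {j. idxf z (length z - e) \<le> j}"

definition strat' :: "'o list \<Rightarrow> 'o \<Rightarrow> 'o" where
  "strat' hist x = (if length hist < E then BET (SZ hist) else stS (take e (SZ hist)) (gmap (SZ hist) x))"

lemma Bndf_ge: "x \<in> set z \<Longrightarrow> x \<le> Bndf z"
  unfolding Bndf_def by (rule Max_ge) auto

lemma Bndf_mono: "set z \<subseteq> set z' \<Longrightarrow> Bndf z \<le> Bndf z'"
  unfolding Bndf_def by (rule Max_mono) auto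

lemma small_Kc: "small (Kc z)"
  unfolding Kc_def by (intro small_insert small_image Mc_small)

lemma gmap_dom: "domE {j. idxf z (length z - e) \<le> j} \<beta>"
  by (rule notsmall_all_dom[OF not_small_ge])

lemma gmap_mono: "strict_mono (gmap z)"
  unfolding gmap_def by (rule strict_monoI) (use enum_mono gmap_dom in blast)

lemma gmap_zero: "gmap z ozero = idxf z (length z - e)"
proof -
  have "gmap z ozero = (LEAST y. y \<in> {j. idxf z (length z - e) \<le> j} \<and> (\<forall>\<gamma> < ozero. gmap z \<gamma> < y))"
    unfolding gmap_def by (rule enum_eq)
  also have "\<dots> = idxf z (length z - e)"
    by (rule Least_equality) (auto simp: leD[OF ozero_least])
  finally show ?thesis .
qed

lemma gmap_ge: "idxf z (length z - e) \<le> gmap z x"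
  using enum_in[OF gmap_dom] unfolding gmap_def by blast

lemma gmap_onto: "idxf z (length z - e) \<le> j \<Longrightarrow> \<exists>i. gmap z i = j"
  using enum_onto[of j "{j. idxf z (length z - e) \<le> j}"] unfolding gmap_def by auto

lemma gmap_nz: "i \<noteq> ozero \<Longrightarrow> idxf z (length z - e) < gmap z i"
proof -
  assume "i \<noteq> ozero"
  hence "ozero < i" using ozero_least[of i] by simp
  hence "gmap z ozero < gmap z i" using gmap_mono strict_monoD by blast
  thus ?thesis using gmap_zero by simp
qed

lemma SZ_len: "length (SZ h) = length h"
  unfolding SZ_def by (rule szs_length)

lemma SZ_take: "take k (SZ h) = SZ (take k h)"
  unfolding SZ_def by (rule szs_take)

lemma SZ_nth: "k < length h \<Longrightarrow> SZ h ! k = newsz (take k (SZ h)) (h ! k)"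
  unfolding SZ_def using szs_nth szs_take by metis

end

unbundle cardinal_syntax

lemma dropWhile_fst_gt:
  "sorted_wrt lexless xs \<Longrightarrow> c \<in> set (dropWhile (\<lambda>c. fst c \<le> u) xs) \<Longrightarrow> u < fst c"
proof (induction xs)
  case Nil then show ?case by simp
next
  case (Cons a xs)
  show ?case
  proof (cases "fst a \<le> u")
    case True then show ?thesis using Cons by simp
  next
    case False
    hence "c = a \<or> c \<in> set xs" using Cons.prems(2) by simp
    thus ?thesis
    proof
      assume "c \<in> set xs"
      hence "lexless a c" using Cons.prems(1) by simp
      thus ?thesis using False unfolding lexless_def by auto
    qed (use False in simp)
  qed
qed

context mainloc
begin

abbreviation cs' where "cs' \<equiv> sig_cs' cs u ls"
abbreviation m0 where "m0 \<equiv> sig_m cs u"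

lemma sig_parts: "wf_trm ar tau" "trm_vars tau \<subseteq> {..<length cs}" "cs \<noteq> []" "sorted_wrt lexless cs"
    "u < E" "length ls = length cs - m0" "sorted_wrt lexless cs'"
  using sig unfolding sigma_iv_def iota_def by auto

lemma bnd_parts: "\<And>i j. (i, j) \<in> set cs \<Longrightarrow> 1 \<le> i \<and> i \<le> s \<and> 1 \<le> j \<and> j \<le> r"
    "\<And>i j. (i, j) \<in> set cs' \<Longrightarrow> 1 \<le> i \<and> i \<le> s \<and> 1 \<le> j \<and> j \<le> r"
    "1 \<le> u" "u \<le> s" "1 \<le> v" "v \<le> r"
  using bnd unfolding consts_bounded_def by auto

lemma E_in: "(E, snd (last cs)) \<in> set cs"
  using sig_parts(3) unfolding iota_def by simp

lemma E_le_s: "E \<le> s" using bnd_parts(1)[OF E_in] by simp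
lemma u_pos: "1 \<le> u" by (rule bnd_parts(3))
lemma uE: "u < E" by (rule sig_parts(5))

lemma fst_le_E: "c \<in> set cs \<Longrightarrow> fst c \<le> E"
proof -
  assume "c \<in> set cs"
  then obtain i where i: "i < length cs" "cs ! i = c" by (auto simp: in_set_conv_nth)
  show "fst c \<le> E"
  proof (cases "i = length cs - 1")
    case True then show ?thesis using i sig_parts(3) unfolding iota_def by (simp add: last_conv_nth)
  next
    case False
    hence "i < length cs - 1" using i by simp
    hence "lexless (cs ! i) (cs ! (length cs - 1))"
      using sorted_wrt_nth_less[OF sig_parts(4)] sig_parts(3) by simp
    thus ?thesis using i sig_parts(3) unfolding lexless_def iota_def by (auto simp: last_conv_nth)
  qed
qed

lemma drop_m0: "drop m0 cs = dropWhile (\<lambda>c. fst c \<le> u) cs"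
  unfolding sig_m_def by (rule dropWhile_eq_drop[symmetric])

lemma late_gt: "c \<in> set (drop m0 cs) \<Longrightarrow> u < fst c"
  using drop_m0 dropWhile_fst_gt[OF sig_parts(4)] by simp

lemma cs'_eq: "cs' = take m0 cs @ zip (map fst (drop m0 cs)) ls"
  unfolding sig_cs'_def by simp

lemma map_fst_cs': "map fst cs' = map fst cs"
proof -
  have "length (map fst (drop m0 cs)) = length ls" using sig_parts(6) by simp
  hence "map fst (zip (map fst (drop m0 cs)) ls) = map fst (drop m0 cs)" by simp
  hence "map fst cs' = map fst (take m0 cs) @ map fst (drop m0 cs)" using cs'_eq by simp
  thus ?thesis by (simp add: map_append[symmetric])
qed

lemma len_cs': "length cs' = length cs"
  using map_fst_cs' by (metis length_map)

lemma early_filter: "k \<le> u \<Longrightarrow> filter (\<lambda>c. fst c = k) cs' = filter (\<lambda>c. fst c = k) cs"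
proof -
  assume k: "k \<le> u"
  have "filter (\<lambda>c. fst c = k) (drop m0 cs) = []" unfolding filter_empty_conv
  proof
    fix c assume "c \<in> set (drop m0 cs)"
    hence "u < fst c" by (rule late_gt)
    thus "\<not> fst c = k" using k by simp
  qed
  moreover have "filter (\<lambda>c. fst c = k) (zip (map fst (drop m0 cs)) ls) = []"
  proof -
    have "\<forall>c\<in>set (zip (map fst (drop m0 cs)) ls). u < fst c"
      using late_gt by (auto dest!: set_zip_leftD)
    thus ?thesis using k by (auto simp: filter_empty_conv)
  qed
  moreover have "cs = take m0 cs @ drop m0 cs" by simp
  ultimately show ?thesis using cs'_eq by (metis filter_append append_Nil2)
qed

lemma nnk_cs': "length (filter (\<lambda>c. fst c = k) cs') = nnk k"
  unfolding nnk_def using length_filter_fst[OF map_fst_cs'] .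

lemma fst_cs'_set: "fst ` set cs' = fst ` set cs"
  using map_fst_cs' by (metis set_map)

end

unbundle cardinal_syntax

context mainloc
begin

lemma e_le_E: "e \<le> E" using iot by simp

context
  fixes mus :: "'o list"
  assumes len: "length mus = E"
begin

definition zs where "zs = SZ mus"
definition z0 where "z0 = take e zs"
definition bb where "bb k = BET (take k zs)"
definition KK where "KK = insert None (Some ` Mc (bb u))"
definition ZZ where "ZZ k = (if k \<le> e then XS z0 k else YS z0 (idxf zs (k - e)))"

lemma zs_len: "length zs = E" unfolding zs_def using SZ_len len by simp
lemma z0_len: "length z0 = e" unfolding z0_def using zs_len e_le_E by simp

lemma zs_early: "1 \<le> k \<Longrightarrow> k \<le> u \<Longrightarrow> zs ! (k - 1) = mus ! (k - 1)"
proof -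
  assume k: "1 \<le> k" "k \<le> u"
  hence "k - 1 < length mus" using len uE by simp
  hence "zs ! (k - 1) = newsz (take (k - 1) zs) (mus ! (k - 1))" unfolding zs_def by (rule SZ_nth)
  moreover have "length (take (k - 1) zs) = k - 1" using zs_len k uE by simp
  ultimately show ?thesis unfolding newsz_def using k by simp
qed

lemma zs_late: "u < k \<Longrightarrow> k \<le> E \<Longrightarrow>
   zs ! (k - 1) = ERb (nnk k) (Colors E (Bndf (take (k - 1) zs)) KK) (mus ! (k - 1))"
proof -
  assume k: "u < k" "k \<le> E"
  hence "k - 1 < length mus" using len by simp
  hence "zs ! (k - 1) = newsz (take (k - 1) zs) (mus ! (k - 1))" unfolding zs_def by (rule SZ_nth)
  moreover have l: "length (take (k - 1) zs) = k - 1" using zs_len k by simp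
  moreover have "take u (take (k - 1) zs) = take u zs" using k by (simp add: min_absorb1)
  hence "Kc (take (k - 1) zs) = KK"
    unfolding Kc_def KK_def bb_def by simp
  moreover have "Suc (k - 1) = k" using k by simp
  ultimately show ?thesis unfolding newsz_def using k by simp
qed

lemma strat_bet: "1 \<le> k \<Longrightarrow> k \<le> E \<Longrightarrow> strat' (take k mus) ozero = bb k"
proof -
  assume k: "1 \<le> k" "k \<le> E"
  show ?thesis
  proof (cases "k < E")
    case True
    then show ?thesis unfolding strat'_def bb_def zs_def using len by (simp add: SZ_take)
  next
    case False
    hence kE: "k = E" using k by simp
    have "strat' (take k mus) ozero = stS (take e zs) (gmap zs ozero)"
      unfolding strat'_def zs_def using kE len by simp
    also have "\<dots> = stS (take e zs) (idxf zs (length zs - e))" by (simp add: gmap_zero)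
    also have "\<dots> = bb k" unfolding bb_def BET_def using kE zs_len e_le_E by simp
    finally show ?thesis .
  qed
qed

lemma tail_eq: "strat' mus = (\<lambda>x. stS z0 (gmap zs x))"
  unfolding strat'_def z0_def zs_def using len by (simp add: fun_eq_iff)

lemma bb_lt_e: "k < e \<Longrightarrow> bb k = stS (take k z0) ozero"
  unfolding bb_def BET_def z0_def using zs_len e_le_E by (simp add: min_def)

lemma bb_ge_e: "e \<le> k \<Longrightarrow> k \<le> E \<Longrightarrow> bb k = stS z0 (idxf zs (k - e))"
proof -
  assume k: "e \<le> k" "k \<le> E"
  have "bb k = stS (take e (take k zs)) (idxf (take k zs) (k - e))"
    unfolding bb_def BET_def using k zs_len by (simp add: min_def)
  also have "take e (take k zs) = z0" unfolding z0_def using k by (simp add: min_def)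
  also have "idxf (take k zs) (k - e) = idxf zs (k - e)" using k by (intro idxf_prefix) simp
  finally show ?thesis .
qed

lemma bb_e: "bb e = stS z0 ozero"
  using bb_ge_e[of e] e_le_E by simp

lemma bb_mono: "1 \<le> k \<Longrightarrow> k < E \<Longrightarrow> bb k < bb (Suc k)"
proof -
  assume k: "1 \<le> k" "k < E"
  have w1: "\<forall>k. 1 \<le> k \<and> k < e \<longrightarrow> stS (take k z0) ozero < stS (take (Suc k) z0) ozero"
    using win_parts(1)[OF z0_len] .
  have w2: "stS (take e z0) ozero = stS z0 ozero" using win_parts(2)[OF z0_len] .
  have w3: "strict_mono (stS z0)" using win_parts(3)[OF z0_len] .
  show ?thesis
  proof (cases "Suc k < e")
    case True
    then show ?thesis using w1 k bb_lt_e by simp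
  next
    case False
    show ?thesis
    proof (cases "Suc k = e")
      case True
      hence "bb k = stS (take k z0) ozero" using bb_lt_e by simp
      also have "\<dots> < stS (take e z0) ozero" using w1 k True by auto
      also have "\<dots> = bb (Suc k)" using w2 bb_e True by simp
      finally show ?thesis .
    next
      case False
      hence ke: "e \<le> k" using \<open>\<not> Suc k < e\<close> by simp
      have "e \<le> length zs" using zs_len e_le_E by simp
      hence "idxf zs (k - e) < idxf zs (Suc k - e)" using ke by (intro idxf_mono) auto
      hence "stS z0 (idxf zs (k - e)) < stS z0 (idxf zs (Suc k - e))" using w3 strict_monoD by blast
      thus ?thesis using bb_ge_e ke k by simp
    qed
  qed
qed

lemma idx_nz: "e < k \<Longrightarrow> idxf zs (k - e) \<noteq> ozero"
proof -
  assume k: "e < k"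
  then obtain j where j: "k - e = Suc j" by (metis Suc_diff_Suc)
  have "e \<le> length zs" using zs_len e_le_E by simp
  thus ?thesis using idxf_spec[of zs j] j by simp
qed

lemma ZZ_level: "1 \<le> k \<Longrightarrow> k \<le> E \<Longrightarrow> ZZ k \<subseteq> {a. F a = bb k}"
proof -
  assume k: "1 \<le> k" "k \<le> E"
  show ?thesis
  proof (cases "k \<le> e")
    case True
    hence "ZZ k \<subseteq> {a. F a = stS (take k z0) ozero}" unfolding ZZ_def
      using XS_level[OF z0_len] k by simp
    moreover have "stS (take k z0) ozero = bb k"
    proof (cases "k < e")
      case True then show ?thesis using bb_lt_e by simp
    next
      case False
      hence "k = e" using \<open>k \<le> e\<close> by simp
      thus ?thesis using win_parts(2)[OF z0_len] bb_e by simp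
    qed
    ultimately show ?thesis by simp
  next
    case False
    hence "ZZ k = YS z0 (idxf zs (k - e))" unfolding ZZ_def by simp
    also have "\<dots> \<subseteq> {a. F a = stS z0 (idxf zs (k - e))}" using YS_level[OF z0_len idx_nz] False by simp
    finally show ?thesis using bb_ge_e False k by simp
  qed
qed

lemma ZZ_size: "1 \<le> k \<Longrightarrow> k \<le> E \<Longrightarrow> |{j. j < zs ! (k - 1)}| \<le>o |ZZ k|"
proof -
  assume k: "1 \<le> k" "k \<le> E"
  show ?thesis
  proof (cases "k \<le> e")
    case True
    have "|XS z0 k| =o |{j. j < z0 ! (k - 1)}|" using XS_card[OF z0_len] k True by simp
    moreover have "z0 ! (k - 1) = zs ! (k - 1)" unfolding z0_def using k True by simp
    ultimately have "|{j. j < zs ! (k - 1)}| =o |XS z0 k|" using ordIso_symmetric by simp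
    thus ?thesis unfolding ZZ_def using True ordIso_imp_ordLeq by simp
  next
    case False
    then obtain j where j: "k - e = Suc j" by (metis Suc_diff_Suc not_le)
    have "e \<le> length zs" using zs_len e_le_E by simp
    hence "|{x. x < zs ! (e + j)}| \<le>o |YS (take e zs) (idxf zs (Suc j))|" using idxf_spec by blast
    moreover have "e + j = k - 1" using j by simp
    ultimately show ?thesis unfolding ZZ_def z0_def using False j by simp
  qed
qed

end
end

unbundle cardinal_syntax

context mainloc
begin

lemma small_KK: "small (insert None (Some ` Mc b))"
  by (intro small_insert small_image Mc_small)

context
  fixes mus :: "'o list"
  assumes len: "length mus = E"
begin

definition hh :: "nat \<Rightarrow> 'o \<Rightarrow> 'm" where
  "hh k = (SOME h. inj_on h {j. j < zs mus ! (k - 1)} \<and> h ` {j. j < zs mus ! (k - 1)} \<subseteq> ZZ mus k)"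

lemma hh_spec: "1 \<le> k \<Longrightarrow> k \<le> E \<Longrightarrow>
   inj_on (hh k) {j. j < zs mus ! (k - 1)} \<and> hh k ` {j. j < zs mus ! (k - 1)} \<subseteq> ZZ mus k"
proof -
  assume k: "1 \<le> k" "k \<le> E"
  have "\<exists>h. inj_on h {j. j < zs mus ! (k - 1)} \<and> h ` {j. j < zs mus ! (k - 1)} \<subseteq> ZZ mus k"
    using ZZ_size[OF len k] card_of_ordLeq by blast
  thus ?thesis unfolding hh_def by (rule someI_ex)
qed

abbreviation q where "q \<equiv> E - u"

definition VV :: "'o set list \<Rightarrow> 'm option" where
  "VV ds = (let xs = map (\<lambda>k. lsort lt (hh (Suc k) ` (ds ! k))) [0..<u];
     Sub = (\<lambda>k. if k \<le> u then subl k xs cs else lsort lt (hh k ` (ds ! (k - 1))));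
     val = PhiT fI tau cs Sub; a = xs ! (u - 1) ! (v - 1)
   in if lt val a \<and> val \<in> Mc (bb mus u) then Some val else None)"

definition D0 :: "'o set list set" where
  "D0 = {d0. length d0 = u \<and> (\<forall>k<u. d0 ! k \<subseteq> {i. i < zs mus ! k})}"

definition PHconc :: "(nat \<Rightarrow> 'o set) \<Rightarrow> bool" where
  "PHconc H \<longleftrightarrow> (\<forall>j<q. H j \<subseteq> {i. i < zs mus ! (u + j)} \<and> |{i. i < mus ! (u + j)}| \<le>o |H j| ) \<and>
    (\<forall>d0\<in>D0. \<forall>ds ds'. lateok q (\<lambda>j. nnk (Suc (u + j))) H ds \<longrightarrow>
        lateok q (\<lambda>j. nnk (Suc (u + j))) H ds' \<longrightarrow> VV (d0 @ ds) = VV (d0 @ ds'))"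

definition HP where "HP = (SOME H. PHconc H)"

lemma HP_spec: "PHconc HP"
proof -
  have "\<exists>H. PHconc H" unfolding PHconc_def
  proof (rule PH[where K = "KK mus" and N = E and ?b0.0 = "Bndf (take u (zs mus))"
        and Bnd = "\<lambda>j. Bndf (take (u + j) (zs mus))"])
    show "small (KK mus)" by (simp add: KK_def[OF len] small_KK)
    show "\<forall>ds. VV ds \<in> KK mus" unfolding VV_def KK_def[OF len] Let_def by simp
    show "\<forall>j<q. zs mus ! (u + j) = ERb (nnk (Suc (u + j))) (Colors E (Bndf (take (u + j) (zs mus))) (KK mus)) (mus ! (u + j))"
    proof (intro allI impI)
      fix j assume j: "j < q"
      have "zs mus ! (Suc (u + j) - 1) = ERb (nnk (Suc (u + j))) (Colors E (Bndf (take (Suc (u + j) - 1) (zs mus))) (KK mus)) (mus ! (Suc (u + j) - 1))"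
        by (rule zs_late[OF len]) (use j in auto)
      thus "zs mus ! (u + j) = ERb (nnk (Suc (u + j))) (Colors E (Bndf (take (u + j) (zs mus))) (KK mus)) (mus ! (u + j))"
        by simp
    qed
    show "\<forall>j<q. Bndf (take u (zs mus)) \<le> Bndf (take (u + j) (zs mus)) \<and>
        (\<forall>j'<j. zs mus ! (u + j') \<le> Bndf (take (u + j) (zs mus)))"
    proof (intro allI impI conjI)
      fix j assume j: "j < q"
      show "Bndf (take u (zs mus)) \<le> Bndf (take (u + j) (zs mus))"
        by (rule Bndf_mono) (simp add: set_take_subset_set_take)
      fix j' assume j': "j' < j"
      have "zs mus ! (u + j') \<in> set (take (u + j) (zs mus))"
        using j j' zs_len[OF len] by (auto simp: in_set_conv_nth intro!: exI[of _ "u + j'"])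
      thus "zs mus ! (u + j') \<le> Bndf (take (u + j) (zs mus))" by (rule Bndf_ge)
    qed
    show "\<forall>d0\<in>D0. length d0 + q \<le> E \<and> (\<forall>d\<in>set d0. d \<subseteq> {i. i < Bndf (take u (zs mus))})"
    proof (intro ballI conjI)
      fix d0 assume d0: "d0 \<in> D0"
      thus "length d0 + q \<le> E" unfolding D0_def using uE by simp
      fix d assume "d \<in> set d0"
      then obtain k where k: "k < u" "d = d0 ! k" using d0 unfolding D0_def by (auto simp: in_set_conv_nth)
      have "d \<subseteq> {i. i < zs mus ! k}" using d0 k unfolding D0_def by simp
      moreover have "zs mus ! k \<in> set (take u (zs mus))"
        using k zs_len[OF len] uE by (auto simp: in_set_conv_nth intro!: exI[of _ k])
      hence "zs mus ! k \<le> Bndf (take u (zs mus))" by (rule Bndf_ge)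
      ultimately show "d \<subseteq> {i. i < Bndf (take u (zs mus))}" by (auto intro: order_less_le_trans)
    qed
  qed
  thus ?thesis unfolding HP_def by (rule someI_ex)
qed

definition XX :: "nat \<Rightarrow> 'm set" where
  "XX k = (if k \<le> u then hh k ` {j. j < zs mus ! (k - 1)}
     else (SOME B. B \<subseteq> hh k ` HP (k - Suc u) \<and> |B| =o |{j. j < mus ! (k - 1)}| ))"

lemma XX_late: "u < k \<Longrightarrow> k \<le> E \<Longrightarrow> XX k \<subseteq> hh k ` HP (k - Suc u) \<and> |XX k| =o |{j. j < mus ! (k - 1)}|"
proof -
  assume k: "u < k" "k \<le> E"
  define j where "j = k - Suc u"
  have j: "j < q" "u + j = k - 1" using k unfolding j_def by auto
  have H0: "HP j \<subseteq> {i. i < zs mus ! (u + j)}" "|{i. i < mus ! (u + j)}| \<le>o |HP j|"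
    using HP_spec j(1) unfolding PHconc_def by auto
  note H = H0[unfolded j(2)]
  have inj: "inj_on (hh k) (HP j)" using hh_spec[of k] k H(1) inj_on_subset by auto
  hence "bij_betw (hh k) (HP j) (hh k ` HP j)" by (simp add: bij_betw_imageI)
  hence "|HP j| =o |hh k ` HP j|" by (rule card_of_ordIsoI)
  hence "|{i. i < mus ! (k - 1)}| \<le>o |hh k ` HP j|" using H(2) ordLeq_ordIso_trans by blast
  hence "\<exists>B. B \<subseteq> hh k ` HP j \<and> |B| =o |{i. i < mus ! (k - 1)}|" using small_ex_subset by blast
  hence "(SOME B. B \<subseteq> hh k ` HP j \<and> |B| =o |{i. i < mus ! (k - 1)}| ) \<subseteq> hh k ` HP j \<and>
     |SOME B. B \<subseteq> hh k ` HP j \<and> |B| =o |{i. i < mus ! (k - 1)}| | =o |{i. i < mus ! (k - 1)}|"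
    by (rule someI_ex)
  moreover have "XX k = (SOME B. B \<subseteq> hh k ` HP j \<and> |B| =o |{i. i < mus ! (k - 1)}| )"
    unfolding XX_def j_def using k by simp
  ultimately have "XX k \<subseteq> hh k ` HP j \<and> |XX k| =o |{i. i < mus ! (k - 1)}|" by simp
  thus ?thesis unfolding j_def .
qed

lemma XX_sub: "1 \<le> k \<Longrightarrow> k \<le> E \<Longrightarrow> XX k \<subseteq> ZZ mus k"
proof -
  assume k: "1 \<le> k" "k \<le> E"
  show ?thesis
  proof (cases "k \<le> u")
    case True then show ?thesis unfolding XX_def using hh_spec[OF k] by simp
  next
    case False
    hence "XX k \<subseteq> hh k ` HP (k - Suc u)" using XX_late k by simp
    moreover have jq: "k - Suc u < q" using False k by simp
    have H0: "HP (k - Suc u) \<subseteq> {i. i < zs mus ! (u + (k - Suc u))}"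
      using HP_spec jq unfolding PHconc_def by blast
    moreover have e1: "u + (k - Suc u) = k - 1" using False by simp
    ultimately have "XX k \<subseteq> hh k ` {i. i < zs mus ! (k - 1)}" using H0[unfolded e1] by blast
    thus ?thesis using hh_spec[OF k] by blast
  qed
qed

lemma XX_card: "1 \<le> k \<Longrightarrow> k \<le> E \<Longrightarrow> |XX k| =o |{j. j < mus ! (k - 1)}|"
proof -
  assume k: "1 \<le> k" "k \<le> E"
  show ?thesis
  proof (cases "k \<le> u")
    case True
    have "bij_betw (hh k) {j. j < zs mus ! (k - 1)} (XX k)"
      unfolding XX_def using True hh_spec[OF k] by (simp add: bij_betw_imageI)
    hence "|{j. j < zs mus ! (k - 1)}| =o |XX k|" by (rule card_of_ordIsoI)
    thus ?thesis using zs_early[OF len k(1) True] ordIso_symmetric by simp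
  next
    case False then show ?thesis using XX_late k by simp
  qed
qed

lemma XX_img: "1 \<le> k \<Longrightarrow> k \<le> E \<Longrightarrow> XX k \<subseteq> hh k ` {j. j < zs mus ! (k - 1)}"
proof -
  assume k: "1 \<le> k" "k \<le> E"
  show ?thesis
  proof (cases "k \<le> u")
    case True then show ?thesis unfolding XX_def by simp
  next
    case False
    hence "XX k \<subseteq> hh k ` HP (k - Suc u)" using XX_late k by simp
    moreover have jq: "k - Suc u < q" using False k by simp
    have H0: "HP (k - Suc u) \<subseteq> {i. i < zs mus ! (u + (k - Suc u))}"
      using HP_spec jq unfolding PHconc_def by blast
    moreover have e1: "u + (k - Suc u) = k - 1" using False by simp
    ultimately show ?thesis using H0[unfolded e1] by blast
  qed
qed

lemma XX_level: "1 \<le> k \<Longrightarrow> k \<le> E \<Longrightarrow> XX k \<subseteq> {a. F a = bb mus k}"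
  using XX_sub ZZ_level[OF len] by blast

end
end

unbundle cardinal_syntax

lemma preimg: "inj_on h D \<Longrightarrow> A \<subseteq> h ` D \<Longrightarrow> h ` {i \<in> D. h i \<in> A} = A"
  by blast

lemma preimg_card: "inj_on h D \<Longrightarrow> A \<subseteq> h ` D \<Longrightarrow> finite A \<Longrightarrow>
   finite {i \<in> D. h i \<in> A} \<and> card {i \<in> D. h i \<in> A} = card A"
proof -
  assume a: "inj_on h D" "A \<subseteq> h ` D" "finite A"
  have inj: "inj_on h {i \<in> D. h i \<in> A}" using a(1) by (rule inj_on_subset) blast
  have im: "h ` {i \<in> D. h i \<in> A} = A" using preimg[OF a(1,2)] .
  have "finite {i \<in> D. h i \<in> A}" using finite_imageD[OF _ inj] im a(3) by simp
  moreover have "card {i \<in> D. h i \<in> A} = card A" using card_image[OF inj] im by simp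
  ultimately show ?thesis by simp
qed

context mainloc
begin

context
  fixes mus :: "'o list"
  assumes len: "length mus = E"
begin

lemma subl_facts:
  assumes x: "length x = s" "\<forall>k\<in>{1..E}. x ! (k - 1) \<in> incr_seqs lt r (XX mus k)"
    and P: "P = cs \<or> P = cs'" and k: "1 \<le> k" "k \<le> E"
  shows "sorted_wrt lt (subl k x P)" "set (subl k x P) \<subseteq> set (x ! (k - 1))"
    "length (subl k x P) = nnk k" "distinct (subl k x P)"
proof -
  have xk: "x ! (k - 1) \<in> incr_seqs lt r (XX mus k)" using x(2) k by simp
  hence xl: "length (x ! (k - 1)) = r" "sorted_wrt lt (x ! (k - 1))" unfolding incr_seqs_def by auto
  have sP: "sorted_wrt lexless P" using P sig_parts(4,7) by blast
  have bP: "\<forall>c\<in>set P. fst c = k \<longrightarrow> 1 \<le> snd c \<and> snd c \<le> length (x ! (k - 1))"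
    using P bnd_parts(1,2) xl(1) by fastforce
  show so: "sorted_wrt lt (subl k x P)" by (rule subl_sorted[OF sP bP xl(2)])
  show "set (subl k x P) \<subseteq> set (x ! (k - 1))" by (rule set_subl[OF bP])
  show "length (subl k x P) = nnk k" unfolding length_subl using P nnk_cs' nnk_def by auto
  have "\<And>a. \<not> lt a a" using lin unfolding strict_linorder_def by blast
  thus "distinct (subl k x P)" using so sorted_wrt_irr_distinct by blast
qed

definition d0x :: "'m list list \<Rightarrow> 'o set list" where
  "d0x x = map (\<lambda>k. {i \<in> {j. j < zs mus ! k}. hh mus (Suc k) i \<in> set (x ! k)}) [0..<u]"

definition dsx :: "'m list list \<Rightarrow> (nat \<times> nat) list \<Rightarrow> 'o set list" where
  "dsx x P = map (\<lambda>j. {i \<in> {i. i < zs mus ! (u + j)}. hh mus (Suc (u + j)) i \<in> set (subl (Suc (u + j)) x P)}) [0..<q]"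

lemma d0x_D0: "d0x x \<in> D0 mus"
  unfolding d0x_def D0_def[OF len] by auto

lemma dsx_ok:
  assumes x: "length x = s" "\<forall>k\<in>{1..E}. x ! (k - 1) \<in> incr_seqs lt r (XX mus k)"
    and P: "P = cs \<or> P = cs'"
  shows "lateok q (\<lambda>j. nnk (Suc (u + j))) (HP mus) (dsx x P)"
  unfolding lateok_def
proof (intro conjI allI impI)
  show "length (dsx x P) = q" unfolding dsx_def by simp
  fix j assume j: "j < q"
  define k where "k = Suc (u + j)"
  have k: "1 \<le> k" "k \<le> E" "u < k" using j unfolding k_def by auto
  have km: "k - 1 = u + j" "k - Suc u = j" unfolding k_def by simp_all
  have dj: "dsx x P ! j = {i \<in> {i. i < zs mus ! (k - 1)}. hh mus k i \<in> set (subl k x P)}"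
    unfolding dsx_def k_def using j by simp
  have inj: "inj_on (hh mus k) {i. i < zs mus ! (k - 1)}" using hh_spec[OF len k(1,2)] by blast
  have sub1: "set (subl k x P) \<subseteq> set (x ! (k - 1))" using subl_facts[OF x P k(1,2)] by blast
  have sub2: "set (x ! (k - 1)) \<subseteq> XX mus k" using x(2) k unfolding incr_seqs_def by auto
  have sub3: "XX mus k \<subseteq> hh mus k ` HP mus j" using XX_late[OF len k(3,2)] km by simp
  have HPj: "HP mus j \<subseteq> {i. i < zs mus ! (k - 1)}"
    using HP_spec[OF len] j km unfolding PHconc_def[OF len] by auto
  show "dsx x P ! j \<subseteq> HP mus j"
  proof
    fix i assume "i \<in> dsx x P ! j"
    hence i: "i < zs mus ! (k - 1)" "hh mus k i \<in> set (subl k x P)" using dj by auto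
    then obtain i' where i': "i' \<in> HP mus j" "hh mus k i = hh mus k i'" using sub1 sub2 sub3 by blast
    have "i = i'" using inj_onD[OF inj i'(2)] i(1) i'(1) HPj by auto
    thus "i \<in> HP mus j" using i' by simp
  qed
  have A: "set (subl k x P) \<subseteq> hh mus k ` {i. i < zs mus ! (k - 1)}" using sub1 sub2 sub3 HPj by blast
  have pc: "finite (dsx x P ! j) \<and> card (dsx x P ! j) = card (set (subl k x P))"
    using preimg_card[OF inj A] dj by simp
  thus "finite (dsx x P ! j)" by simp
  have "card (set (subl k x P)) = nnk k"
    using subl_facts[OF x P k(1,2)] distinct_card by metis
  thus "card (dsx x P ! j) = nnk (Suc (u + j))" using pc k_def by simp
qed

lemma subl_cong: "x ! (k - 1) = y ! (k - 1) \<Longrightarrow> subl k x P = subl k y P"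
  unfolding subl_def by simp

lemma subl_early: "k \<le> u \<Longrightarrow> subl k x cs' = subl k x cs"
  unfolding subl_def using early_filter by simp

lemma xk_img:
  assumes x: "\<forall>k\<in>{1..E}. x ! (k - 1) \<in> incr_seqs lt r (XX mus k)" and k: "1 \<le> k" "k \<le> E"
  shows "set (x ! (k - 1)) \<subseteq> hh mus k ` {j. j < zs mus ! (k - 1)}"
    "sorted_wrt lt (x ! (k - 1))" "length (x ! (k - 1)) = r"
proof -
  have "x ! (k - 1) \<in> incr_seqs lt r (XX mus k)" using x k by simp
  thus "set (x ! (k - 1)) \<subseteq> hh mus k ` {j. j < zs mus ! (k - 1)}"
    "sorted_wrt lt (x ! (k - 1))" "length (x ! (k - 1)) = r"
    using XX_img[OF len k] unfolding incr_seqs_def by auto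
qed

lemma VV_eval:
  assumes x: "length x = s" "\<forall>k\<in>{1..E}. x ! (k - 1) \<in> incr_seqs lt r (XX mus k)"
    and P: "P = cs \<or> P = cs'"
  shows "VV mus (d0x x @ dsx x P) = (if lt (PhiT fI tau cs (\<lambda>k. subl k x P)) (cval x (u, v)) \<and>
            PhiT fI tau cs (\<lambda>k. subl k x P) \<in> Mc (bb mus u)
          then Some (PhiT fI tau cs (\<lambda>k. subl k x P)) else None)"
proof -
  define ds where "ds = d0x x @ dsx x P"
  have ld0: "length (d0x x) = u" unfolding d0x_def by simp
  define xs where "xs = map (\<lambda>k. lsort lt (hh mus (Suc k) ` (ds ! k))) [0..<u]"
  have us: "u \<le> s" using bnd_parts(4) .
  have xs_eq: "xs = take u x"
  proof (rule nth_equalityI)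
    show "length xs = length (take u x)" unfolding xs_def using x(1) us by simp
    fix k assume "k < length xs"
    hence k: "k < u" unfolding xs_def by simp
    have k1: "1 \<le> Suc k" "Suc k \<le> E" using k uE by auto
    have dk: "ds ! k = {i \<in> {j. j < zs mus ! k}. hh mus (Suc k) i \<in> set (x ! k)}"
      unfolding ds_def d0x_def using k by (simp add: nth_append)
    have inj: "inj_on (hh mus (Suc k)) {j. j < zs mus ! k}" using hh_spec[OF len k1] by simp
    have "hh mus (Suc k) ` (ds ! k) = set (x ! k)"
      unfolding dk by (rule preimg[OF inj]) (use xk_img(1)[OF x(2) k1] in simp)
    hence "xs ! k = lsort lt (set (x ! k))" unfolding xs_def using k by simp
    also have "\<dots> = x ! k" using lsort_set[OF lin] xk_img(2)[OF x(2) k1] by simp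
    finally show "xs ! k = take u x ! k" using k by simp
  qed
  define Sub where "Sub = (\<lambda>k. if k \<le> u then subl k xs cs else lsort lt (hh mus k ` (ds ! (k - 1))))"
  have Sub_eq: "\<forall>k\<in>fst ` set cs. Sub k = subl k x P"
  proof
    fix k assume "k \<in> fst ` set cs"
    then obtain j where kj: "(k, j) \<in> set cs" by force
    have k: "1 \<le> k" "k \<le> E" using bnd_parts(1)[OF kj] fst_le_E[OF kj] by auto
    show "Sub k = subl k x P"
    proof (cases "k \<le> u")
      case True
      have "xs ! (k - 1) = x ! (k - 1)" using xs_eq True k by simp
      hence "subl k xs cs = subl k x cs" by (rule subl_cong)
      also have "\<dots> = subl k x P"
      proof (cases "P = cs")
        case False
        hence "P = cs'" using P by simp
        thus ?thesis using subl_early[OF True, of x] by simp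
      qed simp
      finally show ?thesis unfolding Sub_def using True by simp
    next
      case False
      define j where "j = k - Suc u"
      have j: "j < q" "Suc (u + j) = k" "k - 1 = u + j" using False k unfolding j_def by auto
      have dk: "ds ! (k - 1) = {i \<in> {i. i < zs mus ! (k - 1)}. hh mus k i \<in> set (subl k x P)}"
        unfolding ds_def dsx_def using j ld0 by (simp add: nth_append)
      have inj: "inj_on (hh mus k) {i. i < zs mus ! (k - 1)}" using hh_spec[OF len k] by simp
      have A: "set (subl k x P) \<subseteq> hh mus k ` {i. i < zs mus ! (k - 1)}"
        using subl_facts(2)[OF x P k] xk_img(1)[OF x(2) k] by blast
      have "hh mus k ` (ds ! (k - 1)) = set (subl k x P)" unfolding dk by (rule preimg[OF inj A])
      hence "Sub k = lsort lt (set (subl k x P))" unfolding Sub_def using False by simp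
      also have "\<dots> = subl k x P" using lsort_set[OF lin subl_facts(1)[OF x P k]] .
      finally show ?thesis .
    qed
  qed
  have val: "PhiT fI tau cs Sub = PhiT fI tau cs (\<lambda>k. subl k x P)"
    by (rule Phi_cong_Sub[OF sig_parts(2) Sub_eq])
  have a: "xs ! (u - 1) ! (v - 1) = cval x (u, v)"
    unfolding cval_def using xs_eq u_pos by simp
  show ?thesis
    unfolding ds_def[symmetric] VV_def[OF len] Let_def xs_def[symmetric] Sub_def[symmetric] val a by simp
qed

lemma prod_sigma:
  assumes x: "length x = s" "\<forall>k\<in>{1..E}. x ! (k - 1) \<in> incr_seqs lt r (XX mus k)"
  shows "sat_sigma fI lt tau cs u v ls x"
proof -
  have c1: "cs = cs \<or> cs = cs'" and c2: "cs' = cs \<or> cs' = cs'" by simp_all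
  have hom: "VV mus (d0x x @ dsx x cs) = VV mus (d0x x @ dsx x cs')"
    using HP_spec[OF len] d0x_D0 dsx_ok[OF x c1] dsx_ok[OF x c2] unfolding PHconc_def[OF len] by blast
  define lhs where "lhs = teval fI (\<lambda>k. cval x (cs ! k)) tau"
  define rhs where "rhs = teval fI (\<lambda>k. cval x (cs' ! k)) tau"
  have L: "PhiT fI tau cs (\<lambda>k. subl k x cs) = lhs"
    unfolding lhs_def by (rule lhs_Phi[OF sig_parts(2), symmetric])
  have "PhiT fI tau cs (\<lambda>k. subl k x cs') = PhiT fI tau cs' (\<lambda>k. subl k x cs')"
    by (rule Phi_cong_P[OF sig_parts(2) map_fst_cs'[symmetric]])
  also have "\<dots> = rhs" unfolding rhs_def using lhs_Phi[of tau cs' fI x] sig_parts(2) len_cs' by simp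
  finally have R: "PhiT fI tau cs (\<lambda>k. subl k x cs') = rhs" .
  have "lhs = rhs" if lt1: "lt lhs (cval x (u, v))"
  proof -
    have u1: "1 \<le> u" "u \<le> E" using u_pos uE by auto
    have "cval x (u, v) \<in> set (x ! (u - 1))"
      unfolding cval_def using xk_img(3)[OF x(2) u1] bnd_parts(5,6) by simp
    moreover have "set (x ! (u - 1)) \<subseteq> XX mus u" using x(2) u1 unfolding incr_seqs_def by auto
    ultimately have "cval x (u, v) \<in> Mc (bb mus u)" using XX_level[OF len u1] level_sub by blast
    hence lM: "lhs \<in> Mc (bb mus u)" using below_mem lt1 by blast
    have "VV mus (d0x x @ dsx x cs) = Some lhs" using VV_eval[OF x c1] L lt1 lM by simp
    hence "VV mus (d0x x @ dsx x cs') = Some lhs" using hom by simp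
    moreover have "VV mus (d0x x @ dsx x cs') = (if lt rhs (cval x (u, v)) \<and> rhs \<in> Mc (bb mus u) then Some rhs else None)"
      using VV_eval[OF x c2] unfolding R .
    ultimately show ?thesis by (auto split: if_splits)
  qed
  thus ?thesis unfolding sat_sigma_def Let_def lhs_def rhs_def by blast
qed

end
end

unbundle cardinal_syntax

lemma incr_mono: "A \<subseteq> B \<Longrightarrow> xs \<in> incr_seqs lt r A \<Longrightarrow> xs \<in> incr_seqs lt r B"
  unfolding incr_seqs_def by auto

context mainloc
begin

context
  fixes mus :: "'o list"
  assumes len: "length mus = E"
begin

abbreviation Yt where "Yt \<equiv> (\<Union>i\<in>{i. i \<noteq> ozero}. YS (z0 mus) (gmap (zs mus) i))"

lemma gmap_nz': "i \<noteq> ozero \<Longrightarrow> gmap (zs mus) i \<noteq> ozero \<and> stS (z0 mus) (idxf (zs mus) (E - e)) < stS (z0 mus) (gmap (zs mus) i)"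
proof -
  assume i: "i \<noteq> ozero"
  have g: "idxf (zs mus) (E - e) < gmap (zs mus) i" using gmap_nz[OF i, of "zs mus"] zs_len[OF len] by simp
  hence "gmap (zs mus) i \<noteq> ozero" using ozero_least[of "idxf (zs mus) (E - e)"] by auto
  moreover have "stS (z0 mus) (idxf (zs mus) (E - e)) < stS (z0 mus) (gmap (zs mus) i)"
    using win_parts(3)[OF z0_len[OF len]] g strict_monoD by blast
  ultimately show ?thesis by simp
qed

lemma Yt_level: "a \<in> Yt \<Longrightarrow> stS (z0 mus) (idxf (zs mus) (E - e)) < F a"
proof -
  assume "a \<in> Yt"
  then obtain i where i: "i \<noteq> ozero" "a \<in> YS (z0 mus) (gmap (zs mus) i)" by blast
  have "F a = stS (z0 mus) (gmap (zs mus) i)" using YS_level[OF z0_len[OF len]] gmap_nz'[OF i(1)] i(2) by blast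
  thus ?thesis using gmap_nz'[OF i(1)] by simp
qed

lemma prod_S:
  assumes x: "length x = s" "\<forall>k\<in>{1..E}. x ! (k - 1) \<in> incr_seqs lt r (XX mus k)"
    and tl: "drop E x \<in> Fblocks lt F r (s - E) Yt"
  shows "x \<in> S"
proof (rule XYS_prod[OF z0_len[OF len] x(1)])
  have xin: "x ! (k - 1) \<in> incr_seqs lt r (ZZ mus k)" if k: "1 \<le> k" "k \<le> E" for k
    using incr_mono[OF XX_sub[OF len k]] x(2) k by simp
  have xlev: "\<And>a. a \<in> set (x ! (k - 1)) \<Longrightarrow> F a = bb mus k" if k: "1 \<le> k" "k \<le> E" for k
  proof -
    fix a assume a: "a \<in> set (x ! (k - 1))"
    have "x ! (k - 1) \<in> incr_seqs lt r (XX mus k)" using x(2) k by simp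
    hence "a \<in> XX mus k" using a unfolding incr_seqs_def by auto
    thus "F a = bb mus k" using XX_level[OF len k] by blast
  qed
  have x0: "x ! (k - 1) ! 0 \<in> set (x ! (k - 1))" if k: "1 \<le> k" "k \<le> E" for k
    using x(2) k rs(1) unfolding incr_seqs_def by auto
  show "\<forall>k\<in>{1..e}. x ! (k - 1) \<in> incr_seqs lt r (XS (z0 mus) k)"
  proof
    fix k assume k: "k \<in> {1..e}"
    hence k': "1 \<le> k" "k \<le> E" using e_le_E by auto
    have "ZZ mus k = XS (z0 mus) k" unfolding ZZ_def[OF len] using k by simp
    thus "x ! (k - 1) \<in> incr_seqs lt r (XS (z0 mus) k)" using xin[OF k'] by simp
  qed
  have tl': "length (drop E x) = s - E" "\<forall>i<s - E. drop E x ! i \<in> incr_seqs lt r Yt"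
    "\<forall>i<s - E. \<forall>j<r. \<forall>l<r. F (drop E x ! i ! j) = F (drop E x ! i ! l)"
    "\<forall>i. Suc i < s - E \<longrightarrow> F (drop E x ! i ! 0) < F (drop E x ! Suc i ! 0)"
    using tl unfolding Fblocks_def mem_Collect_eq by blast+
  have Ytsub: "Yt \<subseteq> (\<Union>i\<in>{i. i \<noteq> ozero}. YS (z0 mus) i)" using gmap_nz' by blast
  have dx: "drop e x ! i = x ! (e + i)" if "i < s - e" for i using that x(1) e by simp
  have dEx: "drop E x ! i = x ! (E + i)" if "i < s - E" for i using that x(1) by simp
  have ES: "E \<le> s" by (rule E_le_s)
  have lateZ: "ZZ mus k \<subseteq> (\<Union>i\<in>{i. i \<noteq> ozero}. YS (z0 mus) i)" if k: "e < k" "k \<le> E" for k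
    unfolding ZZ_def[OF len] using k idx_nz[OF len k(1)] by auto
  show "drop e x \<in> Fblocks lt F r (s - e) (\<Union>i\<in>{i. i \<noteq> ozero}. YS (z0 mus) i)"
    unfolding Fblocks_def
  proof (intro CollectI conjI allI impI)
    show "length (drop e x) = s - e" using x(1) by simp
    fix i assume i: "i < s - e"
    show "drop e x ! i \<in> incr_seqs lt r (\<Union>i\<in>{i. i \<noteq> ozero}. YS (z0 mus) i)"
    proof (cases "e + i < E")
      case True
      have k: "1 \<le> Suc (e + i)" "Suc (e + i) \<le> E" "e < Suc (e + i)" using True by auto
      show ?thesis using incr_mono[OF lateZ[OF k(3,2)] xin[OF k(1,2)]] dx[OF i] by simp
    next
      case False
      have j: "e + i - E < s - E" using i False e ES by simp
      have eq: "drop E x ! (e + i - E) = x ! (e + i)" using dEx[OF j] False by simp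
      have "drop E x ! (e + i - E) \<in> incr_seqs lt r Yt" using tl'(2) j by blast
      hence "x ! (e + i) \<in> incr_seqs lt r Yt" unfolding eq .
      hence "x ! (e + i) \<in> incr_seqs lt r (\<Union>i\<in>{i. i \<noteq> ozero}. YS (z0 mus) i)" by (rule incr_mono[OF Ytsub])
      thus ?thesis unfolding dx[OF i] .
    qed
  next
    fix i j l assume i: "i < s - e" and jl: "j < r" "l < r"
    show "F (drop e x ! i ! j) = F (drop e x ! i ! l)"
    proof (cases "e + i < E")
      case True
      have k: "1 \<le> Suc (e + i)" "Suc (e + i) \<le> E" using True by auto
      have "x ! (Suc (e + i) - 1) \<in> incr_seqs lt r (XX mus (Suc (e + i)))" using bspec[OF x(2), of "Suc (e + i)"] k by simp
      hence "length (x ! (e + i)) = r" unfolding incr_seqs_def by simp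
      hence "x ! (e + i) ! j \<in> set (x ! (e + i))" "x ! (e + i) ! l \<in> set (x ! (e + i))" using jl by auto
      thus ?thesis using xlev[OF k] dx[OF i] by simp
    next
      case False
      have j': "e + i - E < s - E" using i False e ES by simp
      have eq: "drop E x ! (e + i - E) = x ! (e + i)" using dEx[OF j'] False by simp
      have "F (drop E x ! (e + i - E) ! j) = F (drop E x ! (e + i - E) ! l)" using tl'(3) j' jl by blast
      thus ?thesis unfolding eq dx[OF i] .
    qed
  next
    fix i assume i: "Suc i < s - e"
    have ii: "i < s - e" using i by simp
    show "F (drop e x ! i ! 0) < F (drop e x ! Suc i ! 0)"
    proof (cases "Suc (e + i) < E")
      case True
      have k1: "1 \<le> Suc (e + i)" "Suc (e + i) \<le> E" and k2: "1 \<le> Suc (Suc (e + i))" "Suc (Suc (e + i)) \<le> E"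
        using True by auto
      have "F (x ! (e + i) ! 0) = bb mus (Suc (e + i))" using xlev[OF k1] x0[OF k1] by simp
      moreover have "F (x ! Suc (e + i) ! 0) = bb mus (Suc (Suc (e + i)))" using xlev[OF k2] x0[OF k2] by simp
      moreover have "bb mus (Suc (e + i)) < bb mus (Suc (Suc (e + i)))" using bb_mono[OF len k1(1) True] .
      ultimately show ?thesis using dx[OF ii] dx[OF i] by simp
    next
      case False
      show ?thesis
      proof (cases "Suc (e + i) = E")
        case True
        have k1: "1 \<le> E" "E \<le> E" using uE by auto
        have "x ! (E - 1) ! 0 \<in> set (x ! (E - 1))" using x0[OF k1] .
        hence "F (x ! (E - 1) ! 0) = bb mus E" using xlev[OF k1] by simp
        also have "\<dots> = stS (z0 mus) (idxf (zs mus) (E - e))" using bb_ge_e[OF len e_le_E] by simp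
        finally have f1: "F (x ! (E - 1) ! 0) = stS (z0 mus) (idxf (zs mus) (E - e))" .
        have j0: "0 < s - E" using i True by simp
        have "drop E x ! 0 \<in> incr_seqs lt r Yt" using tl'(2) j0 by simp
        hence ss: "set (drop E x ! 0) \<subseteq> Yt" "length (drop E x ! 0) = r" unfolding incr_seqs_def by auto
        have "drop E x ! 0 ! 0 \<in> set (drop E x ! 0)" using ss(2) rs(1) by (intro nth_mem) simp
        hence "drop E x ! 0 ! 0 \<in> Yt" using ss(1) by (rule subsetD[rotated])
        hence "stS (z0 mus) (idxf (zs mus) (E - e)) < F (drop E x ! 0 ! 0)" by (rule Yt_level)
        moreover have "drop E x ! 0 = x ! E" using dEx[OF j0] by simp
        moreover have ei: "E - 1 = e + i" by (simp add: True[symmetric])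
        hence "x ! (e + i) = x ! (E - 1)" "x ! Suc (e + i) = x ! E" by (simp_all add: True[symmetric])
        ultimately show ?thesis using f1 dx[OF ii] dx[OF i] by simp
      next
        case False
        hence ge: "E \<le> e + i" using \<open>\<not> Suc (e + i) < E\<close> by simp
        have j: "Suc (e + i - E) < s - E" using i ge e by simp
        have eq: "drop E x ! (e + i - E) = x ! (e + i)" "drop E x ! Suc (e + i - E) = x ! Suc (e + i)"
          using dEx j ge by (simp_all add: Suc_diff_le)
        have "F (drop E x ! (e + i - E) ! 0) < F (drop E x ! Suc (e + i - E) ! 0)" using tl'(4) j by blast
        thus ?thesis unfolding eq dx[OF ii] dx[OF i] by simp
      qed
    qed
  qed
qed

end
end

unbundle cardinal_syntax

context mainloc
begin

theorem main_result:
  "\<exists>S'. S' \<subseteq> S \<and> superlarge lt F r s E S' \<and> (\<forall>a\<in>S'. sat_sigma fI lt tau cs u v ls a)"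
proof -
  define S' where "S' = {x \<in> S. sat_sigma fI lt tau cs u v ls x}"
  have win: "II_wins lt F r s E S' mus (\<lambda>k. strat' (take k mus) ozero) (strat' mus)"
    if len: "length mus = E" for mus
    unfolding II_wins_iff
  proof (intro conjI)
    show "\<forall>k. 1 \<le> k \<and> k < E \<longrightarrow> strat' (take k mus) ozero < strat' (take (Suc k) mus) ozero"
      using strat_bet[OF len] bb_mono[OF len] by simp
    show "strat' (take E mus) ozero = strat' mus ozero" using len by simp
    have "strict_mono (stS (z0 mus))" using win_parts(3)[OF z0_len[OF len]] .
    thus "strict_mono (strat' mus)" unfolding tail_eq[OF len]
      using gmap_mono by (simp add: strict_mono_def)
    show "\<exists>X Y. WB lt F r s E S' mus (\<lambda>k. strat' (take k mus) ozero) (strat' mus) X Y"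
    proof (intro exI)
      show "WB lt F r s E S' mus (\<lambda>k. strat' (take k mus) ozero) (strat' mus) (XX mus)
              (\<lambda>i. YS (z0 mus) (gmap (zs mus) i))"
        unfolding WB_def
      proof (intro conjI ballI allI impI)
        fix k assume k: "k \<in> {1..E}"
        hence k': "1 \<le> k" "k \<le> E" by auto
        show "XX mus k \<subseteq> {a. F a = strat' (take k mus) ozero}"
          using XX_level[OF len k'] strat_bet[OF len k'] by simp
        show "|XX mus k| =o |{j. j < mus ! (k - 1)}|" by (rule XX_card[OF len k'])
      next
        fix i :: 'o assume i: "i \<noteq> ozero"
        show "YS (z0 mus) (gmap (zs mus) i) \<subseteq> {a. F a = strat' mus i}"
          using YS_level[OF z0_len[OF len]] gmap_nz'[OF len i] unfolding tail_eq[OF len] by simp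
      next
        fix m :: 'o
        obtain j where j: "j \<noteq> ozero" "idxf (zs mus) (E - e) < j" "|{x. x < m}| \<le>o |YS (z0 mus) j|"
          using YS_unb[OF z0_len[OF len]] by blast
        have "idxf (zs mus) (length (zs mus) - e) \<le> j" using j(2) zs_len[OF len] by simp
        then obtain i where gi: "gmap (zs mus) i = j" using gmap_onto by blast
        have "i \<noteq> ozero"
        proof
          assume "i = ozero"
          hence "gmap (zs mus) i = idxf (zs mus) (E - e)" using gmap_zero zs_len[OF len] by simp
          thus False using j(2) gi by simp
        qed
        thus "\<exists>i. i \<noteq> ozero \<and> |{j. j < m}| \<le>o |YS (z0 mus) (gmap (zs mus) i)|" using gi j(3) by blast
      next
        fix x assume x: "length x = s \<and> (\<forall>k\<in>{1..E}. x ! (k - 1) \<in> incr_seqs lt r (XX mus k)) \<and>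
           drop E x \<in> Fblocks lt F r (s - E) (\<Union>i\<in>{i. i \<noteq> ozero}. YS (z0 mus) (gmap (zs mus) i))"
        have "x \<in> S" using prod_S[OF len] x by blast
        moreover have "sat_sigma fI lt tau cs u v ls x" using prod_sigma[OF len] x by blast
        ultimately show "x \<in> S'" unfolding S'_def by simp
      qed
    qed
  qed
  have "superlarge lt F r s E S'"
    unfolding superlarge_def
  proof (intro conjI)
    show "S' \<subseteq> Fblocks lt F r s UNIV" using Ssub unfolding S'_def by blast
    show "\<exists>strat. \<forall>mus. length mus = E \<longrightarrow>
        II_wins lt F r s E S' mus (\<lambda>k. strat (take k mus) ozero) (strat mus)"
      by (rule exI[of _ strat']) (use win in blast)
  qed
  moreover have "S' \<subseteq> S" "\<forall>a\<in>S'. sat_sigma fI lt tau cs u v ls a" unfolding S'_def by auto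
  ultimately show ?thesis by blast
qed

end

theorem proposition4p3:
  fixes isL :: "'f \<Rightarrow> bool" and ar :: "'f \<Rightarrow> nat" and rar :: "'r \<Rightarrow> nat"
    and fI :: "'f \<Rightarrow> 'm list \<Rightarrow> 'm" and rI :: "'r \<Rightarrow> 'm list \<Rightarrow> bool"
    and lsym :: 'r
    and Mc :: "'o::wellorder \<Rightarrow> 'm set"
    and r s e :: nat and S :: "'m list list set"
    and tau :: "'f trm" and cs :: "(nat \<times> nat) list" and u v :: nat and ls :: "nat list"
  defines "lt \<equiv> (\<lambda>a b. rI lsym [a, b])"
  defines "F \<equiv> Fidx Mc"
  assumes countable_L: "countable (Collect isL)" "countable (UNIV :: 'r set)"
    and less_sym: "rar lsym = 2"
    and linord: "strict_linorder lt"
    and skolem: "skolem_model isL ar rar fI rI"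
    and inacc: "strongly_inaccessible_type TYPE('o)"
    and thlike: "theta_like lt TYPE('o)"
    and chain_elem: "\<forall>i. elem_sub ar rar fI rI (Mc i) UNIV \<and> init_seg lt (Mc i) UNIV \<and> Mc i \<noteq> UNIV"
    and chain_end: "\<forall>i j. i < j \<longrightarrow> elem_sub ar rar fI rI (Mc i) (Mc j) \<and> init_seg lt (Mc i) (Mc j)"
    and chain_limit: "\<forall>d. olimit d \<longrightarrow> Mc d = (\<Union>i\<in>{i. i < d}. Mc i)"
    and chain_union: "(\<Union>i. Mc i) = UNIV"
    and rs: "1 \<le> r" "1 \<le> s"
    and e: "1 \<le> e" "e \<le> s"
    and S: "S \<subseteq> Fblocks lt F r s UNIV" "superlarge lt F r s e S"
    and sig: "sigma_iv ar tau cs u v ls"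
    and bnd: "consts_bounded r s cs u v ls"
    and iot: "e \<le> iota cs"
  shows "\<exists>S'. S' \<subseteq> S \<and> superlarge lt F r s (iota cs) S' \<and>
           (\<forall>a\<in>S'. sat_sigma fI lt tau cs u v ls a)"
proof -
  interpret inac "TYPE('o)" by (unfold_locales) (rule inacc)
  have Mc_small: "small (Mc i)" for i
  proof -
    have "init_seg lt (Mc i) UNIV \<and> Mc i \<noteq> UNIV" using chain_elem by blast
    thus ?thesis using thlike unfolding theta_like_def small_def by blast
  qed
  have Mc_mono: "Mc i \<subseteq> Mc j" if "i \<le> j" for i j
  proof (cases "i = j")
    case False
    hence "i < j" using that by simp
    hence "elem_sub ar rar fI rI (Mc i) (Mc j)" using chain_end by blast
    thus ?thesis unfolding elem_sub_def by blast
  qed simp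
  interpret mainloc "TYPE('o)" lt Mc F r s e S fI ar tau cs u v ls
  proof (unfold_locales)
    show "strict_linorder lt" by (rule linord)
    show "F = Fidx Mc" by (simp add: F_def)
    show "\<And>i. small (Mc i)" by (rule Mc_small)
    show "\<And>i j. i \<le> j \<Longrightarrow> Mc i \<subseteq> Mc j" by (rule Mc_mono)
    show "\<And>i. init_seg lt (Mc i) UNIV" using chain_elem by blast
  qed (fact chain_union rs e S sig bnd iot)+
  show ?thesis by (rule main_result)
qed


end
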